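(* Let $n\ge1$, $m\ge 2$, let $\rho_1$ be an $n$-qubit density matrix at time $t_1$, and for each $\alpha=1,\dots,m-1$ let $\mathcal{M}_{\alpha+1|\alpha}$ be a CPTP map on $n$ qubits applied between times $t_\alpha$ and $t_{\alpha+1}$, with Choi–Jamiołkowski matrix $M_{\alpha,\alpha+1}:=\sum_{i,j=0}^{2^n-1}(|i\rangle\langle j|)^T\otimes\mathcal{M}_{\alpha+1|\alpha}(|i\rangle\langle j|)$ acting on $H_\alpha\otimes H_{\alpha+1}$. For $2\le k\le m$ let $R_{12\dots k}$ denote the $k$-time $n$-qubit pseudo-density matrix (defined in the context) of the process restricted to times $t_1,\dots,t_k$. Then $R_{12}=\tfrac12(\rho M_{12}+M_{12}\rho)$ with $\rho=\rho_1\otimes\mathbb{1}_2$, and for every $3\le k\le m$, $$R_{12\dots k}=\tfrac12\big(R_{12\dots k-1}M_{k-1,k}+M_{k-1,k}R_{12\dots k-1}\big),$$ where $R_{12\dots k-1}$ is understood as $R_{12\dots k-1}\otimes\mathbb{1}_k$ and $M_{k-1,k}$ as $\mathbb{1}_{1\cdots k-2}\otimes M_{k-1,k}$ on $H_1\otimes\cdots\otimes H_k$.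
   Context: Each $H_\alpha\cong(\mathbb{C}^2)^{\otimes n}$ is the Hilbert space of the $n$ qubits at time $t_\alpha$. Pauli matrices $\sigma_0=\mathbb{1},\sigma_1,\sigma_2,\sigma_3$; $n$-qubit Pauli matrices are $\tilde\sigma_i\in\{\sigma_0,\dots,\sigma_3\}^{\otimes n}$, $i=0,\dots,4^n-1$. The coarse-grained measurement of $\tilde\sigma_i$ at time $t_\alpha$ is the projective measurement $\{P^\alpha_\pm=(\mathbb{1}\pm\tilde\sigma_i)/2\}$ with outcomes $\pm1$ and Lüders update $\rho\mapsto P^\alpha_\pm\rho P^\alpha_\pm$. For indices $(i_1,\dots,i_k)$ the experiment is: prepare $\rho_1$; at each time $t_\alpha$ ($\alpha=1,\dots,k$) perform the coarse-grained measurement of $\tilde\sigma_{i_\alpha}$, and between $t_\alpha$ and $t_{\alpha+1}$ apply $\mathcal{M}_{\alpha+1|\alpha}$ to the post-measurement state. $\langle\tilde\sigma_{i_1},\dots,\tilde\sigma_{i_k}\rangle$ is the expectation of the product of the $k$ outcomes. The $k$-time pseudo-density matrix is $$R_{12\dots k}=\frac{1}{2^{kn}}\sum_{i_1,\dots,i_k=0}^{4^n-1}\langle\tilde\sigma_{i_1},\dots,\tilde\sigma_{i_k}\rangle\,\tilde\sigma_{i_1}\otimes\cdots\otimes\tilde\sigma_{i_k}.$$ *)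

theory Defs
  imports Complex_Main "Jordan_Normal_Form.Matrix"
begin

definition mtrace :: "complex mat \<Rightarrow> complex" where
  "mtrace A = (\<Sum>i<dim_row A. A $$ (i, i))"

text \<open>Kronecker (tensor) product; the left factor is the more significant index.\<close>
definition kron :: "complex mat \<Rightarrow> complex mat \<Rightarrow> complex mat" where
  "kron A B = mat (dim_row A * dim_row B) (dim_col A * dim_col B)
     (\<lambda>(i, j). A $$ (i div dim_row B, j div dim_col B) * B $$ (i mod dim_row B, j mod dim_col B))"

fun kron_list :: "complex mat list \<Rightarrow> complex mat" where
  "kron_list [] = 1\<^sub>m 1"
| "kron_list (A # As) = kron A (kron_list As)"

definition psd :: "nat \<Rightarrow> complex mat \<Rightarrow> bool" where
  "psd N A \<longleftrightarrow> A \<in> carrier_mat N N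
     \<and> (\<forall>i<N. \<forall>j<N. A $$ (j, i) = cnj (A $$ (i, j)))
     \<and> (\<forall>v :: nat \<Rightarrow> complex.
          let q = (\<Sum>i<N. \<Sum>j<N. cnj (v i) * A $$ (i, j) * v j) in Im q = 0 \<and> Re q \<ge> 0)"

definition density_matrix :: "nat \<Rightarrow> complex mat \<Rightarrow> bool" where
  "density_matrix n \<rho> \<longleftrightarrow> psd (2 ^ n) \<rho> \<and> mtrace \<rho> = 1"

text \<open>Block matrix of dimension d*N: (id_d \<otimes> \<Phi>) acts blockwise.\<close>
definition block :: "nat \<Rightarrow> complex mat \<Rightarrow> nat \<Rightarrow> nat \<Rightarrow> complex mat" where
  "block N X a b = mat N N (\<lambda>(i, j). X $$ (a * N + i, b * N + j))"

definition id_tensor :: "nat \<Rightarrow> nat \<Rightarrow> (complex mat \<Rightarrow> complex mat) \<Rightarrow> complex mat \<Rightarrow> complex mat" where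
  "id_tensor d N \<Phi> X = mat (d * N) (d * N)
     (\<lambda>(i, j). \<Phi> (block N X (i div N) (j div N)) $$ (i mod N, j mod N))"

definition cptp :: "nat \<Rightarrow> (complex mat \<Rightarrow> complex mat) \<Rightarrow> bool" where
  "cptp n \<Phi> \<longleftrightarrow>
     (let N = 2 ^ n in
       (\<forall>A \<in> carrier_mat N N. \<Phi> A \<in> carrier_mat N N)
     \<and> (\<forall>A \<in> carrier_mat N N. \<forall>B \<in> carrier_mat N N. \<Phi> (A + B) = \<Phi> A + \<Phi> B)
     \<and> (\<forall>c. \<forall>A \<in> carrier_mat N N. \<Phi> (c \<cdot>\<^sub>m A) = c \<cdot>\<^sub>m \<Phi> A)
     \<and> (\<forall>A \<in> carrier_mat N N. mtrace (\<Phi> A) = mtrace A)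
     \<and> (\<forall>d > 0. \<forall>X. psd (d * N) X \<longrightarrow> psd (d * N) (id_tensor d N \<Phi> X)))"

definition ketbra :: "nat \<Rightarrow> nat \<Rightarrow> nat \<Rightarrow> complex mat" where
  "ketbra N i j = mat N N (\<lambda>(a, b). if a = i \<and> b = j then 1 else 0)"

definition choi :: "nat \<Rightarrow> (complex mat \<Rightarrow> complex mat) \<Rightarrow> complex mat" where
  "choi n \<Phi> = (let N = 2 ^ n in
     mat (N * N) (N * N) (\<lambda>(r, c).
       \<Sum>i<N. \<Sum>j<N. kron (transpose_mat (ketbra N i j)) (\<Phi> (ketbra N i j)) $$ (r, c)))"

definition pauli :: "nat \<Rightarrow> complex mat" where
  "pauli k = (if k = 0 then mat_of_rows_list 2 [[1, 0], [0, 1]]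
      else if k = 1 then mat_of_rows_list 2 [[0, 1], [1, 0]]
      else if k = 2 then mat_of_rows_list 2 [[0, -\<i>], [\<i>, 0]]
      else mat_of_rows_list 2 [[1, 0], [0, -1]])"

text \<open>n-qubit Pauli matrix with index i < 4^n (base-4 digits of i, most significant first).\<close>
fun pauli_n :: "nat \<Rightarrow> nat \<Rightarrow> complex mat" where
  "pauli_n 0 i = 1\<^sub>m 1"
| "pauli_n (Suc n) i = kron (pauli (i div 4 ^ n)) (pauli_n n (i mod 4 ^ n))"

text \<open>Projectors of the coarse-grained measurement, outcome s = +1 or -1.\<close>
definition proj :: "nat \<Rightarrow> nat \<Rightarrow> int \<Rightarrow> complex mat" where
  "proj n i s = (1 / 2 :: complex) \<cdot>\<^sub>m (1\<^sub>m (2 ^ n) + of_int s \<cdot>\<^sub>m pauli_n n i)"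

text \<open>Given the (unnormalised) state sigma at time t_alpha and the remaining Pauli indices
  i_alpha, ..., i_k, the (probability-weighted) expectation of the product of the remaining
  outcomes. Mc alpha is the channel applied between t_alpha and t_(alpha+1).\<close>
fun corr_aux :: "nat \<Rightarrow> (nat \<Rightarrow> complex mat \<Rightarrow> complex mat) \<Rightarrow> nat \<Rightarrow> complex mat \<Rightarrow> nat list \<Rightarrow> complex" where
  "corr_aux n Mc \<alpha> \<sigma> [] = mtrace \<sigma>"
| "corr_aux n Mc \<alpha> \<sigma> [i] =
     (\<Sum>s\<in>{1, -1::int}. of_int s * mtrace (proj n i s * \<sigma> * proj n i s))"
| "corr_aux n Mc \<alpha> \<sigma> (i # j # is) =
     (\<Sum>s\<in>{1, -1::int}. of_int s *
        corr_aux n Mc (Suc \<alpha>) (Mc \<alpha> (proj n i s * \<sigma> * proj n i s)) (j # is))"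

definition corr :: "nat \<Rightarrow> complex mat \<Rightarrow> (nat \<Rightarrow> complex mat \<Rightarrow> complex mat) \<Rightarrow> nat list \<Rightarrow> complex" where
  "corr n \<rho>1 Mc is = corr_aux n Mc 1 \<rho>1 is"

definition pdm :: "nat \<Rightarrow> complex mat \<Rightarrow> (nat \<Rightarrow> complex mat \<Rightarrow> complex mat) \<Rightarrow> nat \<Rightarrow> complex mat" where
  "pdm n \<rho>1 Mc k = (let D = 2 ^ (k * n) in
     mat D D (\<lambda>(r, c). (1 / of_nat D) *
       (\<Sum>is\<in>{is. length is = k \<and> set is \<subseteq> {..<4 ^ n}}.
          corr n \<rho>1 Mc is * kron_list (map (pauli_n n) is) $$ (r, c))))"

end

theory Submission
  imports Defs
begin


lemma sum_lessThan_add: "(\<Sum>t<m+b. f t) = (\<Sum>t<m. f t) + (\<Sum>t<b. f (m+t))" for m b :: nat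
  by (induction b) (simp_all add: add_ac)

lemma sum_split_mult:
  "(\<Sum>t<A*B. f t) = (\<Sum>t1<A. \<Sum>t2<B. f (t1*B + t2))" for A B :: nat
proof (induction A)
  case 0 then show ?case by simp
next
  case (Suc A)
  have "Suc A * B = A*B + B" by simp
  then have "(\<Sum>t<Suc A*B. f t) = (\<Sum>t<A*B + B. f t)" by (simp only:)
  also have "\<dots> = (\<Sum>t<A*B. f t) + (\<Sum>t2<B. f (A*B + t2))"
    by (rule sum_lessThan_add)
  also have "\<dots> = (\<Sum>t1<A. \<Sum>t2<B. f (t1*B + t2)) + (\<Sum>t2<B. f (A*B + t2))"
    by (simp only: Suc.IH)
  also have "\<dots> = (\<Sum>t1<Suc A. \<Sum>t2<B. f (t1*B + t2))"
    by (simp only: sum.lessThan_Suc)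
  finally show ?case .
qed

lemma kron_dims[simp]:
  "dim_row (kron A B) = dim_row A * dim_row B"
  "dim_col (kron A B) = dim_col A * dim_col B"
  unfolding kron_def by (rule dim_row_mat, rule dim_col_mat)

lemma kron_carrier:
  "A \<in> carrier_mat a b \<Longrightarrow> B \<in> carrier_mat c d \<Longrightarrow> kron A B \<in> carrier_mat (a*c) (b*d)"
  unfolding carrier_mat_def by simp

lemma kron_index:
  "i < dim_row A * dim_row B \<Longrightarrow> j < dim_col A * dim_col B \<Longrightarrow>
   kron A B $$ (i,j) = A $$ (i div dim_row B, j div dim_col B) * B $$ (i mod dim_row B, j mod dim_col B)"
  unfolding kron_def by (subst index_mat(1)) auto

lemma idx_less:
  fixes i1 i2 a b :: nat
  assumes "i1 < a" "i2 < b" shows "i1 * b + i2 < a * b"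
proof -
  have "i1 * b + i2 < i1 * b + b" using assms by simp
  also have "\<dots> = Suc i1 * b" by simp
  also have "\<dots> \<le> a * b" using assms(1) by (intro mult_le_mono1) simp
  finally show ?thesis .
qed

lemma kron_index2:
  assumes "i1 < dim_row A" "j1 < dim_col A" "i2 < dim_row B" "j2 < dim_col B"
  shows "kron A B $$ (i1 * dim_row B + i2, j1 * dim_col B + j2) = A $$ (i1, j1) * B $$ (i2, j2)"
  using assms by (simp add: kron_index idx_less)



lemma kron_assoc:
  "kron (kron A B) C = kron A (kron B C)"
proof (rule eq_matI)
  fix i j assume i: "i < dim_row (kron A (kron B C))" and j: "j < dim_col (kron A (kron B C))"
  let ?rb = "dim_row B" and ?rc = "dim_row C" and ?cb = "dim_col B" and ?cc = "dim_col C"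
  have rpos: "?rb > 0" "?rc > 0" and cpos: "?cb > 0" "?cc > 0" using i j
    by (cases "?rb"; simp; fail | cases "?rc"; simp; fail | cases "?cb"; simp; fail | cases "?cc"; simp)+
  have i': "i < dim_row A * ?rb * ?rc" and j': "j < dim_col A * ?cb * ?cc" using i j by (simp_all add: mult.assoc)
  have i2: "i div ?rc < dim_row A * ?rb" using i' rpos by (simp add: less_mult_imp_div_less)
  have j2: "j div ?cc < dim_col A * ?cb" using j' cpos by (simp add: less_mult_imp_div_less)
  have e1: "i div ?rc div ?rb = i div (?rb * ?rc)" by (metis div_mult2_eq mult.commute)
  have e2: "j div ?cc div ?cb = j div (?cb * ?cc)" by (metis div_mult2_eq mult.commute)
  have "i mod (?rb * ?rc) = ?rc * (i div ?rc mod ?rb) + i mod ?rc" by (metis mod_mult2_eq mult.commute)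
  then have e3: "i div ?rc mod ?rb = i mod (?rb * ?rc) div ?rc"
    using rpos by simp
  have "j mod (?cb * ?cc) = ?cc * (j div ?cc mod ?cb) + j mod ?cc" by (metis mod_mult2_eq mult.commute)
  then have e4: "j div ?cc mod ?cb = j mod (?cb * ?cc) div ?cc"
    using cpos by simp
  have e5: "i mod ?rc = i mod (?rb * ?rc) mod ?rc" by (simp add: mod_mod_cancel)
  have e6: "j mod ?cc = j mod (?cb * ?cc) mod ?cc" by (simp add: mod_mod_cancel)
  have m1: "i mod (?rb * ?rc) < ?rb * ?rc" using rpos by simp
  have m2: "j mod (?cb * ?cc) < ?cb * ?cc" using cpos by simp
  have "kron (kron A B) C $$ (i, j) = kron A B $$ (i div ?rc, j div ?cc) * C $$ (i mod ?rc, j mod ?cc)"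
    using i' j' by (intro kron_index) (simp_all add: mult.assoc)
  also have "\<dots> = (A $$ (i div ?rc div ?rb, j div ?cc div ?cb) * B $$ (i div ?rc mod ?rb, j div ?cc mod ?cb))
        * C $$ (i mod ?rc, j mod ?cc)"
    using i2 j2 by (subst kron_index) simp_all
  also have "\<dots> = A $$ (i div (?rb * ?rc), j div (?cb * ?cc)) * (B $$ (i mod (?rb * ?rc) div ?rc, j mod (?cb * ?cc) div ?cc)
        * C $$ (i mod (?rb * ?rc) mod ?rc, j mod (?cb * ?cc) mod ?cc))"
    unfolding e1 e2 e3 e4 by (simp add: mult.assoc flip: e5 e6)
  also have "\<dots> = A $$ (i div (?rb * ?rc), j div (?cb * ?cc)) * kron B C $$ (i mod (?rb * ?rc), j mod (?cb * ?cc))"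
    using m1 m2 by (simp add: kron_index)
  also have "\<dots> = kron A (kron B C) $$ (i, j)"
    using i j by (simp add: kron_index)
  finally show "kron (kron A B) C $$ (i, j) = kron A (kron B C) $$ (i, j)" .
qed (simp_all add: mult.assoc)


lemma sum_prod_split: "(\<Sum>t<a*b. f (t div b) * g (t mod b)) = (\<Sum>t1<a. f t1) * (\<Sum>t2<b. g t2)"
  for f g :: "nat \<Rightarrow> 'a::comm_semiring_1"
proof -
  have "(\<Sum>t<a*b. f (t div b) * g (t mod b)) = (\<Sum>t1<a. \<Sum>t2<b. f ((t1*b+t2) div b) * g ((t1*b+t2) mod b))"
    by (rule sum_split_mult)
  also have "\<dots> = (\<Sum>t1<a. \<Sum>t2<b. f t1 * g t2)"
    by (intro sum.cong refl) auto
  also have "\<dots> = (\<Sum>t1<a. f t1) * (\<Sum>t2<b. g t2)"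
    by (simp add: sum_product)
  finally show ?thesis .
qed

lemma mult_entry:
  assumes "i < dim_row A" "j < dim_col B" "dim_col A = dim_row B"
  shows "(A*B) $$ (i,j) = (\<Sum>t<dim_row B. A $$ (i,t) * B $$ (t,j))"
  using assms by (auto simp: scalar_prod_def atLeast0LessThan intro: sum.cong)

lemma kron_mult:
  assumes "dim_col A = dim_row C" "dim_col B = dim_row D"
  shows "kron A B * kron C D = kron (A * C) (B * D)"
proof (rule eq_matI)
  fix i j assume i: "i < dim_row (kron (A * C) (B * D))" and j: "j < dim_col (kron (A * C) (B * D))"
  have rpos: "dim_row B > 0" and cpos: "dim_col D > 0" using i j
    by (cases "dim_row B"; simp; fail | cases "dim_col D"; simp)+
  have i1: "i div dim_row B < dim_row A" using i by (simp add: less_mult_imp_div_less)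
  have j1: "j div dim_col D < dim_col C" using j by (simp add: less_mult_imp_div_less)
  have "(kron A B * kron C D) $$ (i,j) = (\<Sum>t < dim_col A * dim_col B. kron A B $$ (i,t) * kron C D $$ (t,j))"
    using i j assms by (subst mult_entry) auto
  also have "\<dots> = (\<Sum>t < dim_col A * dim_col B. 
      (A $$ (i div dim_row B, t div dim_col B) * C $$ (t div dim_col B, j div dim_col D)) *
      (B $$ (i mod dim_row B, t mod dim_col B) * D $$ (t mod dim_col B, j mod dim_col D)))"
    using i j assms by (intro sum.cong refl) (simp add: kron_index ac_simps)
  also have "\<dots> = (\<Sum>t1 < dim_col A. A $$ (i div dim_row B, t1) * C $$ (t1, j div dim_col D)) *
       (\<Sum>t2 < dim_col B. B $$ (i mod dim_row B, t2) * D $$ (t2, j mod dim_col D))"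
    by (rule sum_prod_split)
  also have "\<dots> = kron (A * C) (B * D) $$ (i,j)"
    using i j i1 j1 rpos cpos assms by (simp add: kron_index scalar_prod_def atLeast0LessThan)
  finally show "(kron A B * kron C D) $$ (i,j) = kron (A * C) (B * D) $$ (i,j)" .
qed auto

lemma kron_one_right: "kron A (1\<^sub>m 1) = A"
proof (rule eq_matI)
  fix i j assume "i < dim_row A" "j < dim_col A"
  then show "kron A (1\<^sub>m 1) $$ (i, j) = A $$ (i, j)" by (simp add: kron_index)
qed simp_all

lemma kron_one_left: "kron (1\<^sub>m 1) A = A"
proof (rule eq_matI)
  fix i j assume "i < dim_row A" "j < dim_col A"
  then show "kron (1\<^sub>m 1) A $$ (i, j) = A $$ (i, j)" by (simp add: kron_index)
qed simp_all



lemma pauli_carrier: "pauli k \<in> carrier_mat 2 2"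
  unfolding pauli_def mat_of_rows_list_def carrier_mat_def by simp

lemma pauli_dims[simp]: "dim_row (pauli k) = 2" "dim_col (pauli k) = 2"
  using pauli_carrier[of k] by auto

lemma pauli_n_carrier: "pauli_n n i \<in> carrier_mat (2^n) (2^n)"
proof (induction n arbitrary: i)
  case 0 then show ?case by simp
next
  case (Suc n)
  then show ?case using kron_carrier[OF pauli_carrier Suc.IH] by simp
qed

lemma pauli_n_dims[simp]: "dim_row (pauli_n n i) = 2^n" "dim_col (pauli_n n i) = 2^n"
  using pauli_n_carrier[of n i] by auto

lemma less2: "(u::nat) < 2 \<Longrightarrow> u = 0 \<or> u = 1" by auto

lemma pauli_entries:
  "pauli q $$ (0,0) = (if q = 1 \<or> q = 2 then 0 else 1)"
  "pauli q $$ (0,1) = (if q = 1 then 1 else if q = 2 then -\<i> else 0)"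
  "pauli q $$ (1,0) = (if q = 1 then 1 else if q = 2 then \<i> else 0)"
  "pauli q $$ (1,1) = (if q = 1 \<or> q = 2 then 0 else if q = 0 then 1 else -1)"
  unfolding pauli_def mat_of_rows_list_def by (auto simp: index_mat)

lemma sum4: "(\<Sum>q<4::nat. f q) = f 0 + f 1 + f 2 + f 3"
  by (simp add: numeral_eq_Suc lessThan_Suc add_ac)

lemma pauli_complete1:
  assumes "u < 2" "v < 2" "x < 2" "y < 2"
  shows "(\<Sum>q<4. pauli q $$ (u,v) * pauli q $$ (x,y)) = (if u = y \<and> v = x then 2 else 0)"
  using less2[OF assms(1)] less2[OF assms(2)] less2[OF assms(3)] less2[OF assms(4)]
  by (auto simp: sum4 pauli_def mat_of_rows_list_def)

lemma eq_divmod: "0 < N \<Longrightarrow> (u::nat) = y \<longleftrightarrow> u div N = y div N \<and> u mod N = y mod N"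
  by (metis div_mult_mod_eq)

lemma pauli_n_Suc_index:
  assumes "q < 4" "r < 4^n"
  shows "pauli_n (Suc n) (q * 4^n + r) = kron (pauli q) (pauli_n n r)"
  using assms by simp

lemma pauli_complete:
  assumes "u < 2^n" "v < 2^n" "x < 2^n" "y < 2^n"
  shows "(\<Sum>j<4^n. pauli_n n j $$ (u,v) * pauli_n n j $$ (x,y)) = (if u = y \<and> v = x then 2^n else 0)"
  using assms
proof (induction n arbitrary: u v x y)
  case 0 then show ?case by simp
next
  case (Suc n)
  let ?N = "2^n :: nat"
  have Npos: "0 < ?N" by simp
  have d: "u div ?N < 2" "v div ?N < 2" "x div ?N < 2" "y div ?N < 2"
    using Suc.prems by (simp_all add: less_mult_imp_div_less mult.commute)
  have m: "u mod ?N < ?N" "v mod ?N < ?N" "x mod ?N < ?N" "y mod ?N < ?N" by simp_all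
  have "(\<Sum>j<4^Suc n. pauli_n (Suc n) j $$ (u,v) * pauli_n (Suc n) j $$ (x,y))
     = (\<Sum>q<4. \<Sum>r<4^n. pauli_n (Suc n) (q * 4^n + r) $$ (u,v) * pauli_n (Suc n) (q * 4^n + r) $$ (x,y))"
    by (simp add: sum_split_mult)
  also have "\<dots> = (\<Sum>q<4. \<Sum>r<4^n. (pauli q $$ (u div ?N, v div ?N) * pauli q $$ (x div ?N, y div ?N))
        * (pauli_n n r $$ (u mod ?N, v mod ?N) * pauli_n n r $$ (x mod ?N, y mod ?N)))"
  proof (intro sum.cong refl)
    fix q r assume "q \<in> {..<4::nat}" "r \<in> {..<4^n::nat}"
    then show "pauli_n (Suc n) (q * 4^n + r) $$ (u,v) * pauli_n (Suc n) (q * 4^n + r) $$ (x,y) =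
       (pauli q $$ (u div ?N, v div ?N) * pauli q $$ (x div ?N, y div ?N))
        * (pauli_n n r $$ (u mod ?N, v mod ?N) * pauli_n n r $$ (x mod ?N, y mod ?N))"
      using Suc.prems by (simp add: pauli_n_Suc_index kron_index mult.commute mult.left_commute)
  qed
  also have "\<dots> = (\<Sum>q<4. pauli q $$ (u div ?N, v div ?N) * pauli q $$ (x div ?N, y div ?N))
        * (\<Sum>r<4^n. pauli_n n r $$ (u mod ?N, v mod ?N) * pauli_n n r $$ (x mod ?N, y mod ?N))"
    by (simp add: sum_product)
  also have "\<dots> = (if u div ?N = y div ?N \<and> v div ?N = x div ?N then 2 else 0)
       * (if u mod ?N = y mod ?N \<and> v mod ?N = x mod ?N then 2^n else 0)"
    using pauli_complete1[OF d] Suc.IH[OF m] by simp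
  also have "\<dots> = (if u = y \<and> v = x then 2^Suc n else 0)"
    using eq_divmod[OF Npos, of u y] eq_divmod[OF Npos, of v x] by auto
  finally show ?case .
qed


lemma trace_mult:
  assumes "A \<in> carrier_mat N K" "B \<in> carrier_mat K N"
  shows "mtrace (A * B) = (\<Sum>a<N. \<Sum>b<K. A $$ (a,b) * B $$ (b,a))"
proof -
  have d: "dim_row (A * B) = N" using assms by simp
  show ?thesis unfolding mtrace_def d
  proof (intro sum.cong refl)
    fix a assume "a \<in> {..<N}"
    then show "(A * B) $$ (a, a) = (\<Sum>b<K. A $$ (a,b) * B $$ (b,a))"
      using assms by (subst mult_entry) auto
  qed
qed

lemma sum_if_collapse2:
  fixes f :: "nat \<Rightarrow> nat \<Rightarrow> complex"
  assumes "x < N" "y < M"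
  shows "(\<Sum>a<M. \<Sum>b<N. f a b * (if a = y \<and> b = x then c else 0)) = f y x * c"
proof -
  have "(\<Sum>a<M. \<Sum>b<N. f a b * (if a = y \<and> b = x then c else 0)) = (\<Sum>a<M. if a = y then f a x * c else 0)"
  proof (intro sum.cong refl)
    fix a assume "a \<in> {..<M}"
    show "(\<Sum>b<N. f a b * (if a = y \<and> b = x then c else 0)) = (if a = y then f a x * c else 0)"
    proof (cases "a = y")
      case True
      have "(\<Sum>b<N. f a b * (if a = y \<and> b = x then c else 0)) = (\<Sum>b<N. if b = x then f a b * c else 0)"
        using True by (intro sum.cong refl) auto
      also have "\<dots> = f a x * c" using assms by simp
      finally show ?thesis using True by simp
    qed simp
  qed
  also have "\<dots> = f y x * c" using assms by simp
  finally show ?thesis .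
qed

lemma pauli_expand:
  assumes W: "W \<in> carrier_mat (2^n) (2^n)" and xy: "x < 2^n" "y < 2^n"
  shows "(\<Sum>j<4^n. mtrace (pauli_n n j * W) * pauli_n n j $$ (x,y)) = 2^n * W $$ (x,y)"
proof -
  let ?N = "2^n :: nat"
  have "(\<Sum>j<4^n. mtrace (pauli_n n j * W) * pauli_n n j $$ (x,y))
     = (\<Sum>j<4^n. \<Sum>a<?N. \<Sum>b<?N. W $$ (b,a) * (pauli_n n j $$ (a,b) * pauli_n n j $$ (x,y)))"
    using W by (simp add: trace_mult[OF pauli_n_carrier W] sum_distrib_left sum_distrib_right mult_ac)
  also have "\<dots> = (\<Sum>a<?N. \<Sum>b<?N. \<Sum>j<4^n. W $$ (b,a) * (pauli_n n j $$ (a,b) * pauli_n n j $$ (x,y)))"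
    by (subst sum.swap) (simp add: sum.swap[of _ "{..<4^n}"])
  also have "\<dots> = (\<Sum>a<?N. \<Sum>b<?N. W $$ (b,a) * (if a = y \<and> b = x then of_nat ?N else 0))"
    using xy by (intro sum.cong refl) (simp add: sum_distrib_left[symmetric] pauli_complete)
  also have "\<dots> = W $$ (x,y) * of_nat ?N"
    using xy by (rule sum_if_collapse2)
  finally show ?thesis by simp
qed


definition anti :: "complex mat \<Rightarrow> complex mat \<Rightarrow> complex mat" where
  "anti Q \<sigma> = (1/2 :: complex) \<cdot>\<^sub>m (Q * \<sigma> + \<sigma> * Q)"

lemma anti_carrier: "Q \<in> carrier_mat N N \<Longrightarrow> \<sigma> \<in> carrier_mat N N \<Longrightarrow> anti Q \<sigma> \<in> carrier_mat N N"
  unfolding anti_def by simp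

lemma proj_carrier: "proj n i s \<in> carrier_mat (2^n) (2^n)"
  unfolding proj_def using pauli_n_carrier[of n i] by simp

lemma proj_dims[simp]: "dim_row (proj n i s) = 2^n" "dim_col (proj n i s) = 2^n"
  using proj_carrier[of n i s] by auto

lemma proj_entry: "a < 2^n \<Longrightarrow> b < 2^n \<Longrightarrow>
  proj n i s $$ (a,b) = (1/2) * ((if a = b then 1 else 0) + of_int s * pauli_n n i $$ (a,b))"
  unfolding proj_def by simp

lemma trace_add: "A \<in> carrier_mat N N \<Longrightarrow> B \<in> carrier_mat N N \<Longrightarrow> mtrace (A + B) = mtrace A + mtrace B"
  unfolding mtrace_def by (simp add: sum.distrib)

lemma trace_smult: "A \<in> carrier_mat N N \<Longrightarrow> mtrace (c \<cdot>\<^sub>m A) = c * mtrace A"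
  unfolding mtrace_def by (auto simp: sum_distrib_left intro: sum.cong)

lemma trace_comm: "A \<in> carrier_mat N N \<Longrightarrow> B \<in> carrier_mat N N \<Longrightarrow> mtrace (A * B) = mtrace (B * A)"
proof -
  assume A: "A \<in> carrier_mat N N" and B: "B \<in> carrier_mat N N"
  have "mtrace (A * B) = (\<Sum>a<N. \<Sum>b<N. A $$ (a,b) * B $$ (b,a))" by (rule trace_mult[OF A B])
  also have "\<dots> = (\<Sum>b<N. \<Sum>a<N. A $$ (a,b) * B $$ (b,a))" by (rule sum.swap)
  also have "\<dots> = (\<Sum>b<N. \<Sum>a<N. B $$ (b,a) * A $$ (a,b))" by (simp add: mult.commute)
  also have "\<dots> = mtrace (B * A)" by (rule trace_mult[OF B A, symmetric])
  finally show ?thesis .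
qed

lemma ent3:
  fixes A B C :: "complex mat"
  assumes "A \<in> carrier_mat N N" "B \<in> carrier_mat N N" "C \<in> carrier_mat N N" "a < N" "b < N"
  shows "(A * B * C) $$ (a,b) = (\<Sum>t<N. \<Sum>u<N. B $$ (u,t) * (A $$ (a,u) * C $$ (t,b)))"
proof -
  have "(A * B * C) $$ (a,b) = (\<Sum>t<N. (A * B) $$ (a,t) * C $$ (t,b))"
    using assms by (subst mult_entry) auto
  also have "\<dots> = (\<Sum>t<N. (\<Sum>u<N. A $$ (a,u) * B $$ (u,t)) * C $$ (t,b))"
    using assms by (intro sum.cong refl) (subst mult_entry, auto)
  also have "\<dots> = (\<Sum>t<N. \<Sum>u<N. B $$ (u,t) * (A $$ (a,u) * C $$ (t,b)))"
    unfolding sum_distrib_right by (intro sum.cong refl) (simp add: mult_ac)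
  finally show ?thesis .
qed

lemma delta_sum: "(a::nat) < N \<Longrightarrow> (\<Sum>u<N. (if a = u then 1 else 0) * f u) = (f a :: complex)"
proof -
  assume a: "a < N"
  have "(\<Sum>u<N. (if a = u then 1 else 0) * f u) = (\<Sum>u<N. if a = u then f u else 0)"
    by (intro sum.cong refl) simp
  also have "\<dots> = f a" using a by (simp add: sum.delta')
  finally show ?thesis .
qed

lemma delta_sum': "(a::nat) < N \<Longrightarrow> (\<Sum>u<N. (if u = a then 1 else 0) * f u) = (f a :: complex)"
  using delta_sum[of a N f] by (simp add: eq_commute)

lemma scal: "(s::complex) * ((1/2) * (d1 + p1) * ((1/2) * (d2 + p2))) -
   s * ((1/2) * (d1 + - p1) * ((1/2) * (d2 + - p2))) = s * ((1/2) * (d1 * p2 + p1 * d2))"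
  by (simp add: field_simps)

lemma proj_diff:
  assumes \<sigma>: "\<sigma> \<in> carrier_mat (2^n) (2^n)"
  shows "proj n i 1 * \<sigma> * proj n i 1 + (-1) \<cdot>\<^sub>m (proj n i (-1) * \<sigma> * proj n i (-1)) = anti (pauli_n n i) \<sigma>"
proof (rule eq_matI)
  let ?N = "2^n :: nat" and ?P = "pauli_n n i"
  fix a b assume a: "a < dim_row (anti ?P \<sigma>)" and b: "b < dim_col (anti ?P \<sigma>)"
  have ab: "a < ?N" "b < ?N" using a b \<sigma> by (auto simp: anti_def)
  let ?d = "\<lambda>x y. (if x = y then 1 else 0) :: complex"
  have "(proj n i 1 * \<sigma> * proj n i 1 + (-1) \<cdot>\<^sub>m (proj n i (-1) * \<sigma> * proj n i (-1))) $$ (a,b)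
     = (proj n i 1 * \<sigma> * proj n i 1) $$ (a,b) - (proj n i (-1) * \<sigma> * proj n i (-1)) $$ (a,b)"
    using ab \<sigma> proj_carrier[of n i] by simp
  also have "\<dots> = (\<Sum>t<?N. \<Sum>u<?N. \<sigma> $$ (u,t) * (proj n i 1 $$ (a,u) * proj n i 1 $$ (t,b)))
      - (\<Sum>t<?N. \<Sum>u<?N. \<sigma> $$ (u,t) * (proj n i (-1) $$ (a,u) * proj n i (-1) $$ (t,b)))"
    by (simp only: ent3[OF proj_carrier \<sigma> proj_carrier ab])
  also have "\<dots> = (\<Sum>t<?N. \<Sum>u<?N. \<sigma> $$ (u,t) * ((1/2) * (?d a u * ?P $$ (t,b) + ?P $$ (a,u) * ?d t b)))"
    unfolding sum_subtractf[symmetric]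
  proof (intro sum.cong refl)
    fix t u assume t: "t \<in> {..<?N}" and u: "u \<in> {..<?N}"
    have e1: "proj n i 1 $$ (a,u) = (1/2) * (?d a u + ?P $$ (a,u))"
      using ab u by (simp add: proj_entry)
    have e2: "proj n i 1 $$ (t,b) = (1/2) * (?d t b + ?P $$ (t,b))"
      using ab t by (simp add: proj_entry)
    have e3: "proj n i (-1) $$ (a,u) = (1/2) * (?d a u + - ?P $$ (a,u))"
      using ab u by (simp add: proj_entry)
    have e4: "proj n i (-1) $$ (t,b) = (1/2) * (?d t b + - ?P $$ (t,b))"
      using ab t by (simp add: proj_entry)
    show "\<sigma> $$ (u,t) * (proj n i 1 $$ (a,u) * proj n i 1 $$ (t,b)) -
        \<sigma> $$ (u,t) * (proj n i (-1) $$ (a,u) * proj n i (-1) $$ (t,b)) =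
        \<sigma> $$ (u,t) * ((1/2) * (?d a u * ?P $$ (t,b) + ?P $$ (a,u) * ?d t b))"
      unfolding e1 e2 e3 e4 by (rule scal)
  qed
  also have "\<dots> = (\<Sum>t<?N. \<Sum>u<?N. (1/2) * (?d a u * (\<sigma> $$ (u,t) * ?P $$ (t,b))) + (1/2) * (?d t b * (?P $$ (a,u) * \<sigma> $$ (u,t))))"
    by (intro sum.cong refl) (simp add: algebra_simps)
  also have "\<dots> = (1/2) * ((\<Sum>t<?N. \<Sum>u<?N. ?d a u * (\<sigma> $$ (u,t) * ?P $$ (t,b)))
            + (\<Sum>t<?N. ?d t b * (\<Sum>u<?N. ?P $$ (a,u) * \<sigma> $$ (u,t))))"
    by (simp only: sum.distrib sum_distrib_left distrib_left)
  also have "\<dots> = (1/2) * ((\<Sum>t<?N. \<sigma> $$ (a,t) * ?P $$ (t,b)) + (\<Sum>u<?N. ?P $$ (a,u) * \<sigma> $$ (u,b)))"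
    using ab by (simp add: delta_sum delta_sum')
  also have "\<dots> = anti ?P \<sigma> $$ (a,b)"
  proof -
    have m1: "(?P*\<sigma>)$$(a,b) = (\<Sum>u<?N. ?P$$(a,u)*\<sigma>$$(u,b))" using ab \<sigma> by (subst mult_entry) auto
    have m2: "(\<sigma>*?P)$$(a,b) = (\<Sum>t<?N. \<sigma>$$(a,t)*?P$$(t,b))" using ab \<sigma> by (subst mult_entry) auto
    have "anti ?P \<sigma> $$ (a,b) = (1/2) * ((?P*\<sigma>)$$(a,b) + (\<sigma>*?P)$$(a,b))"
      unfolding anti_def using ab \<sigma> by (simp del: index_mult_mat(1))
    then show ?thesis unfolding m1 m2 by (simp add: add.commute)
  qed
  finally show "(proj n i 1 * \<sigma> * proj n i 1 + (-1) \<cdot>\<^sub>m (proj n i (-1) * \<sigma> * proj n i (-1))) $$ (a,b) = anti ?P \<sigma> $$ (a,b)" .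
qed (use \<sigma> in \<open>simp_all add: anti_def\<close>)


lemma cptpD:
  assumes "cptp n \<Phi>"
  shows "A \<in> carrier_mat (2^n) (2^n) \<Longrightarrow> \<Phi> A \<in> carrier_mat (2^n) (2^n)"
    and "A \<in> carrier_mat (2^n) (2^n) \<Longrightarrow> B \<in> carrier_mat (2^n) (2^n) \<Longrightarrow> \<Phi> (A + B) = \<Phi> A + \<Phi> B"
    and "A \<in> carrier_mat (2^n) (2^n) \<Longrightarrow> \<Phi> (c \<cdot>\<^sub>m A) = c \<cdot>\<^sub>m \<Phi> A"
  using assms unfolding cptp_def Let_def by blast+

lemma sand_carrier: "P \<in> carrier_mat N N \<Longrightarrow> A \<in> carrier_mat N N \<Longrightarrow> P * A * P \<in> carrier_mat N N"
  by (metis mult_carrier_mat)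

lemma sand_add:
  assumes "P \<in> carrier_mat N N" "A \<in> carrier_mat N N" "B \<in> carrier_mat N N"
  shows "P * (A + B) * P = P * A * P + P * B * P"
proof -
  have "P * (A + B) = P * A + P * B" by (rule mult_add_distrib_mat[OF assms])
  moreover have "(P * A + P * B) * P = P * A * P + P * B * P"
    by (rule add_mult_distrib_mat[OF mult_carrier_mat[OF assms(1,2)] mult_carrier_mat[OF assms(1,3)] assms(1)])
  ultimately show ?thesis by simp
qed

lemma sand_smult:
  fixes P A :: "complex mat"
  assumes "P \<in> carrier_mat N N" "A \<in> carrier_mat N N"
  shows "P * (c \<cdot>\<^sub>m A) * P = c \<cdot>\<^sub>m (P * A * P)"
proof -
  have "P * (c \<cdot>\<^sub>m A) = c \<cdot>\<^sub>m (P * A)" by (rule mult_smult_distrib[OF assms])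
  moreover have "(c \<cdot>\<^sub>m (P * A)) * P = c \<cdot>\<^sub>m (P * A * P)"
    by (rule mult_smult_assoc_mat[OF mult_carrier_mat[OF assms] assms(1)])
  ultimately show ?thesis by simp
qed

lemma sum_pm: "(\<Sum>s\<in>{1, -1::int}. f s) = f 1 + f (-1)"
  by simp

lemma corr_lin:
  assumes "\<forall>\<beta>. \<alpha> \<le> \<beta> \<longrightarrow> Suc \<beta> < \<alpha> + length ys \<longrightarrow> cptp n (Mc \<beta>)"
    and "A \<in> carrier_mat (2^n) (2^n)" "B \<in> carrier_mat (2^n) (2^n)"
  shows "corr_aux n Mc \<alpha> (A + B) ys = corr_aux n Mc \<alpha> A ys + corr_aux n Mc \<alpha> B ys
       \<and> corr_aux n Mc \<alpha> (c \<cdot>\<^sub>m A) ys = c * corr_aux n Mc \<alpha> A ys"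
  using assms
proof (induction ys arbitrary: \<alpha> A B c)
  case Nil
  then show ?case by (simp add: trace_add trace_smult)
next
  case (Cons i ys)
  let ?P = "\<lambda>s. proj n i s"
  have PC: "\<And>s. ?P s \<in> carrier_mat (2^n) (2^n)" by (rule proj_carrier)
  show ?case
  proof (cases ys)
    case Nil
    have "\<And>s. mtrace (?P s * (A + B) * ?P s) = mtrace (?P s * A * ?P s) + mtrace (?P s * B * ?P s)"
      using Cons.prems PC by (simp add: sand_add[OF PC] trace_add[OF sand_carrier[OF PC] sand_carrier[OF PC]])
    moreover have "\<And>s. mtrace (?P s * (c \<cdot>\<^sub>m A) * ?P s) = c * mtrace (?P s * A * ?P s)"
      using Cons.prems PC by (simp add: sand_smult[OF PC] trace_smult[OF sand_carrier[OF PC]])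
    ultimately show ?thesis using Nil by (simp add: sum_pm algebra_simps)
  next
    case (Cons j js)
    have ok: "cptp n (Mc \<alpha>)" using Cons.prems(1) \<open>ys = j # js\<close> by auto
    have ok2: "\<forall>\<beta>. Suc \<alpha> \<le> \<beta> \<longrightarrow> Suc \<beta> < Suc \<alpha> + length ys \<longrightarrow> cptp n (Mc \<beta>)"
      using Cons.prems(1) by auto
    have C1: "\<And>s X. X \<in> carrier_mat (2^n) (2^n) \<Longrightarrow> Mc \<alpha> (?P s * X * ?P s) \<in> carrier_mat (2^n) (2^n)"
      using cptpD(1)[OF ok] sand_carrier[OF PC] by blast
    have e1: "\<And>s. Mc \<alpha> (?P s * (A + B) * ?P s) = Mc \<alpha> (?P s * A * ?P s) + Mc \<alpha> (?P s * B * ?P s)"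
      using Cons.prems PC by (simp add: sand_add[OF PC] cptpD(2)[OF ok sand_carrier[OF PC Cons.prems(2)] sand_carrier[OF PC Cons.prems(3)]])
    have e2: "\<And>s. Mc \<alpha> (?P s * (c \<cdot>\<^sub>m A) * ?P s) = c \<cdot>\<^sub>m Mc \<alpha> (?P s * A * ?P s)"
      using Cons.prems PC by (simp add: sand_smult[OF PC] cptpD(3)[OF ok sand_carrier[OF PC Cons.prems(2)]])
    have IH: "\<And>s. corr_aux n Mc (Suc \<alpha>) (Mc \<alpha> (?P s * (A + B) * ?P s)) ys
       = corr_aux n Mc (Suc \<alpha>) (Mc \<alpha> (?P s * A * ?P s)) ys + corr_aux n Mc (Suc \<alpha>) (Mc \<alpha> (?P s * B * ?P s)) ys"
      "\<And>s. corr_aux n Mc (Suc \<alpha>) (Mc \<alpha> (?P s * (c \<cdot>\<^sub>m A) * ?P s)) ys = c * corr_aux n Mc (Suc \<alpha>) (Mc \<alpha> (?P s * A * ?P s)) ys"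
      unfolding e1 e2 using Cons.IH[OF ok2 C1 C1] Cons.prems by blast+
    show ?thesis using IH \<open>ys = j # js\<close> by (simp add: sum_pm algebra_simps)
  qed
qed

lemma corr_last:
  assumes "\<sigma> \<in> carrier_mat (2^n) (2^n)"
  shows "corr_aux n Mc \<alpha> \<sigma> [i] = mtrace (pauli_n n i * \<sigma>)"
proof -
  let ?P = "pauli_n n i"
  have PC: "\<And>s. proj n i s \<in> carrier_mat (2^n) (2^n)" by (rule proj_carrier)
  have "corr_aux n Mc \<alpha> \<sigma> [i] = mtrace (proj n i 1 * \<sigma> * proj n i 1) + (-1) * mtrace (proj n i (-1) * \<sigma> * proj n i (-1))"
    by (simp add: sum_pm)
  also have "\<dots> = mtrace (proj n i 1 * \<sigma> * proj n i 1 + (-1) \<cdot>\<^sub>m (proj n i (-1) * \<sigma> * proj n i (-1)))"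
    using assms PC by (simp add: trace_add[OF sand_carrier[OF PC assms] smult_carrier_mat[OF sand_carrier[OF PC assms]]] trace_smult[OF sand_carrier[OF PC assms]])
  also have "\<dots> = mtrace (anti ?P \<sigma>)" using proj_diff[OF assms] by simp
  also have "\<dots> = (1/2) * (mtrace (?P * \<sigma>) + mtrace (\<sigma> * ?P))"
    unfolding anti_def using assms pauli_n_carrier[of n i]
    by (simp add: trace_smult[OF add_carrier_mat[OF mult_carrier_mat[OF assms pauli_n_carrier]]]
          trace_add[OF mult_carrier_mat[OF pauli_n_carrier assms] mult_carrier_mat[OF assms pauli_n_carrier]])
  also have "\<dots> = mtrace (?P * \<sigma>)"
    using trace_comm[OF assms pauli_n_carrier[of n i]] by simp
  finally show ?thesis .
qed

lemma corr_step:
  assumes ok: "cptp n (Mc \<alpha>)" and \<sigma>: "\<sigma> \<in> carrier_mat (2^n) (2^n)"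
    and ok2: "\<forall>\<beta>. Suc \<alpha> \<le> \<beta> \<longrightarrow> Suc \<beta> < Suc \<alpha> + length ys \<longrightarrow> cptp n (Mc \<beta>)"
    and ne: "ys \<noteq> []"
  shows "corr_aux n Mc \<alpha> \<sigma> (i # ys) = corr_aux n Mc (Suc \<alpha>) (Mc \<alpha> (anti (pauli_n n i) \<sigma>)) ys"
proof -
  obtain j js where ys: "ys = j # js" using ne by (cases ys) auto
  have PC: "\<And>s. proj n i s \<in> carrier_mat (2^n) (2^n)" by (rule proj_carrier)
  let ?X = "\<lambda>s. proj n i s * \<sigma> * proj n i s"
  have XC: "\<And>s. ?X s \<in> carrier_mat (2^n) (2^n)" using sand_carrier[OF PC \<sigma>] by blast
  have MC: "\<And>s. Mc \<alpha> (?X s) \<in> carrier_mat (2^n) (2^n)" using cptpD(1)[OF ok XC] .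
  have "corr_aux n Mc \<alpha> \<sigma> (i # ys) = corr_aux n Mc (Suc \<alpha>) (Mc \<alpha> (?X 1)) ys + (-1) * corr_aux n Mc (Suc \<alpha>) (Mc \<alpha> (?X (-1))) ys"
    using ys by (simp add: sum_pm)
  also have "\<dots> = corr_aux n Mc (Suc \<alpha>) (Mc \<alpha> (?X 1)) ys + corr_aux n Mc (Suc \<alpha>) ((-1) \<cdot>\<^sub>m Mc \<alpha> (?X (-1))) ys"
    using corr_lin[OF ok2 MC MC, of "-1" "-1"] by simp
  also have "\<dots> = corr_aux n Mc (Suc \<alpha>) (Mc \<alpha> (?X 1) + (-1) \<cdot>\<^sub>m Mc \<alpha> (?X (-1))) ys"
    using corr_lin[OF ok2 MC smult_carrier_mat[OF MC], of 1 "-1" "-1"] by simp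
  also have "Mc \<alpha> (?X 1) + (-1) \<cdot>\<^sub>m Mc \<alpha> (?X (-1)) = Mc \<alpha> (?X 1 + (-1) \<cdot>\<^sub>m ?X (-1))"
    using cptpD(2)[OF ok XC smult_carrier_mat[OF XC]] cptpD(3)[OF ok XC] by simp
  also have "?X 1 + (-1) \<cdot>\<^sub>m ?X (-1) = anti (pauli_n n i) \<sigma>" by (rule proj_diff[OF \<sigma>])
  finally show ?thesis .
qed

fun evolve :: "nat \<Rightarrow> (nat \<Rightarrow> complex mat \<Rightarrow> complex mat) \<Rightarrow> nat \<Rightarrow> complex mat \<Rightarrow> nat list \<Rightarrow> complex mat" where
  "evolve n Mc \<alpha> \<sigma> [] = \<sigma>"
| "evolve n Mc \<alpha> \<sigma> (i # xs) = evolve n Mc (Suc \<alpha>) (Mc \<alpha> (anti (pauli_n n i) \<sigma>)) xs"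

lemma evolve_carrier:
  assumes "\<forall>\<beta>. \<alpha> \<le> \<beta> \<longrightarrow> \<beta> < \<alpha> + length xs \<longrightarrow> cptp n (Mc \<beta>)"
    and "\<sigma> \<in> carrier_mat (2^n) (2^n)"
  shows "evolve n Mc \<alpha> \<sigma> xs \<in> carrier_mat (2^n) (2^n)"
  using assms
proof (induction xs arbitrary: \<alpha> \<sigma>)
  case Nil then show ?case by simp
next
  case (Cons i xs)
  have ok: "cptp n (Mc \<alpha>)" using Cons.prems(1) by auto
  have "Mc \<alpha> (anti (pauli_n n i) \<sigma>) \<in> carrier_mat (2^n) (2^n)"
    by (rule cptpD(1)[OF ok anti_carrier[OF pauli_n_carrier Cons.prems(2)]])
  moreover have "\<forall>\<beta>. Suc \<alpha> \<le> \<beta> \<longrightarrow> \<beta> < Suc \<alpha> + length xs \<longrightarrow> cptp n (Mc \<beta>)"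
    using Cons.prems(1) by auto
  ultimately show ?case using Cons.IH by simp
qed

lemma corr_append:
  assumes "\<forall>\<beta>. \<alpha> \<le> \<beta> \<longrightarrow> Suc \<beta> < \<alpha> + length xs + length ys \<longrightarrow> cptp n (Mc \<beta>)"
    and "\<sigma> \<in> carrier_mat (2^n) (2^n)" and "ys \<noteq> []"
  shows "corr_aux n Mc \<alpha> \<sigma> (xs @ ys) = corr_aux n Mc (\<alpha> + length xs) (evolve n Mc \<alpha> \<sigma> xs) ys"
  using assms
proof (induction xs arbitrary: \<alpha> \<sigma>)
  case Nil then show ?case by simp
next
  case (Cons i xs)
  have ok: "cptp n (Mc \<alpha>)" using Cons.prems(1,3) by (cases ys) auto
  have C: "Mc \<alpha> (anti (pauli_n n i) \<sigma>) \<in> carrier_mat (2^n) (2^n)"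
    by (rule cptpD(1)[OF ok anti_carrier[OF pauli_n_carrier Cons.prems(2)]])
  have ok2: "\<forall>\<beta>. Suc \<alpha> \<le> \<beta> \<longrightarrow> Suc \<beta> < Suc \<alpha> + length (xs @ ys) \<longrightarrow> cptp n (Mc \<beta>)"
    using Cons.prems(1) by auto
  have ok3: "\<forall>\<beta>. Suc \<alpha> \<le> \<beta> \<longrightarrow> Suc \<beta> < Suc \<alpha> + length xs + length ys \<longrightarrow> cptp n (Mc \<beta>)"
    using Cons.prems(1) by auto
  have "corr_aux n Mc \<alpha> \<sigma> ((i # xs) @ ys) = corr_aux n Mc (Suc \<alpha>) (Mc \<alpha> (anti (pauli_n n i) \<sigma>)) (xs @ ys)"
    using corr_step[OF ok Cons.prems(2) ok2] Cons.prems(3) by simp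
  also have "\<dots> = corr_aux n Mc (Suc \<alpha> + length xs) (evolve n Mc (Suc \<alpha>) (Mc \<alpha> (anti (pauli_n n i) \<sigma>)) xs) ys"
    using Cons.IH[OF ok3 C Cons.prems(3)] .
  finally show ?case by simp
qed


lemma ketbra_carrier: "ketbra N i j \<in> carrier_mat N N"
  unfolding ketbra_def by simp

lemma ketbra_entry: "a < N \<Longrightarrow> b < N \<Longrightarrow> ketbra N i j $$ (a,b) = (if a = i \<and> b = j then 1 else 0)"
  unfolding ketbra_def by simp

lemma phi_zero:
  assumes ok: "cptp n \<Phi>"
  shows "\<Phi> (0\<^sub>m (2^n) (2^n)) = 0\<^sub>m (2^n) (2^n)"
proof -
  have Z: "0\<^sub>m (2^n) (2^n) \<in> carrier_mat (2^n) (2^n)" by simp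
  have "0\<^sub>m (2^n) (2^n) = (0::complex) \<cdot>\<^sub>m 0\<^sub>m (2^n) (2^n)" by (rule eq_matI) auto
  then have "\<Phi> (0\<^sub>m (2^n) (2^n)) = 0 \<cdot>\<^sub>m \<Phi> (0\<^sub>m (2^n) (2^n))"
    using cptpD(3)[OF ok Z, of 0] by simp
  also have "\<dots> = 0\<^sub>m (2^n) (2^n)"
    using cptpD(1)[OF ok Z] by (intro eq_matI) auto
  finally show ?thesis .
qed

lemma phi_sum:
  assumes ok: "cptp n \<Phi>" and fin: "finite S" and E: "\<And>s. s \<in> S \<Longrightarrow> E s \<in> carrier_mat (2^n) (2^n)"
  shows "\<Phi> (mat (2^n) (2^n) (\<lambda>(a,b). \<Sum>s\<in>S. f s * E s $$ (a,b)))
       = mat (2^n) (2^n) (\<lambda>(a,b). \<Sum>s\<in>S. f s * \<Phi> (E s) $$ (a,b))"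
  using fin E
proof (induction S rule: finite_induct)
  case empty
  have e1: "mat (2^n) (2^n) (\<lambda>(a,b). \<Sum>s\<in>{}. f s * E s $$ (a,b)) = 0\<^sub>m (2^n) (2^n)"
    by (rule eq_matI) auto
  have e2: "mat (2^n) (2^n) (\<lambda>(a,b). \<Sum>s\<in>{}. f s * \<Phi> (E s) $$ (a,b)) = 0\<^sub>m (2^n) (2^n)"
    by (rule eq_matI) auto
  show ?case by (simp only: e1 e2 phi_zero[OF ok])
next
  case (insert x F)
  let ?M = "mat (2^n) (2^n) (\<lambda>(a,b). \<Sum>s\<in>F. f s * E s $$ (a,b))"
  have Ex: "E x \<in> carrier_mat (2^n) (2^n)" using insert.prems by simp
  have MC: "?M \<in> carrier_mat (2^n) (2^n)" by simp
  have "mat (2^n) (2^n) (\<lambda>(a,b). \<Sum>s\<in>insert x F. f s * E s $$ (a,b)) = f x \<cdot>\<^sub>m E x + ?M"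
    using insert.hyps Ex by (intro eq_matI) auto
  then have "\<Phi> (mat (2^n) (2^n) (\<lambda>(a,b). \<Sum>s\<in>insert x F. f s * E s $$ (a,b))) = f x \<cdot>\<^sub>m \<Phi> (E x) + \<Phi> ?M"
    using cptpD(2)[OF ok smult_carrier_mat[OF Ex] MC] cptpD(3)[OF ok Ex] by simp
  also have "\<Phi> ?M = mat (2^n) (2^n) (\<lambda>(a,b). \<Sum>s\<in>F. f s * \<Phi> (E s) $$ (a,b))"
    using insert.prems by (intro insert.IH) auto
  also have "f x \<cdot>\<^sub>m \<Phi> (E x) + \<dots> = mat (2^n) (2^n) (\<lambda>(a,b). \<Sum>s\<in>insert x F. f s * \<Phi> (E s) $$ (a,b))"
    using insert.hyps cptpD(1)[OF ok Ex] by (intro eq_matI) auto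
  finally show ?case .
qed

lemma phi_expand:
  assumes ok: "cptp n \<Phi>" and X: "X \<in> carrier_mat (2^n) (2^n)" and xy: "x < 2^n" "y < 2^n"
  shows "\<Phi> X $$ (x,y) = (\<Sum>u<2^n. \<Sum>v<2^n. X $$ (u,v) * \<Phi> (ketbra (2^n) u v) $$ (x,y))"
proof -
  let ?N = "2^n :: nat"
  let ?S = "{..<?N} \<times> {..<?N}"
  have "X = mat ?N ?N (\<lambda>(a,b). \<Sum>s\<in>?S. X $$ s * ketbra ?N (fst s) (snd s) $$ (a,b))"
  proof (rule eq_matI)
    fix a b assume ab: "a < dim_row (mat ?N ?N (\<lambda>(a,b). \<Sum>s\<in>?S. X $$ s * ketbra ?N (fst s) (snd s) $$ (a,b)))"
      "b < dim_col (mat ?N ?N (\<lambda>(a,b). \<Sum>s\<in>?S. X $$ s * ketbra ?N (fst s) (snd s) $$ (a,b)))"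
    then have a: "a < ?N" and b: "b < ?N" by auto
    have "(\<Sum>s\<in>?S. X $$ s * ketbra ?N (fst s) (snd s) $$ (a,b)) = (\<Sum>s\<in>?S. if s = (a,b) then X $$ s else 0)"
      using a b by (intro sum.cong refl) (auto simp: ketbra_entry)
    also have "\<dots> = X $$ (a,b)" using a b by simp
    finally show "X $$ (a,b) = mat ?N ?N (\<lambda>(a,b). \<Sum>s\<in>?S. X $$ s * ketbra ?N (fst s) (snd s) $$ (a,b)) $$ (a,b)"
      using a b by simp
  qed (use X in auto)
  then have "\<Phi> X = mat ?N ?N (\<lambda>(a,b). \<Sum>s\<in>?S. X $$ s * \<Phi> (ketbra ?N (fst s) (snd s)) $$ (a,b))"
    using phi_sum[OF ok, of ?S "\<lambda>s. ketbra ?N (fst s) (snd s)" "\<lambda>s. X $$ s"] ketbra_carrier by simp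
  then have "\<Phi> X $$ (x,y) = (\<Sum>s\<in>?S. X $$ s * \<Phi> (ketbra ?N (fst s) (snd s)) $$ (x,y))"
    using xy by simp
  also have "\<dots> = (\<Sum>u<?N. \<Sum>v<?N. X $$ (u,v) * \<Phi> (ketbra ?N u v) $$ (x,y))"
    by (simp add: sum.cartesian_product split_def)
  finally show ?thesis .
qed

lemma choi_carrier: "choi n \<Phi> \<in> carrier_mat (2^n * 2^n) (2^n * 2^n)"
  unfolding choi_def Let_def by simp

lemma choi_entry:
  assumes ok: "cptp n \<Phi>" and b: "x1 < 2^n" "x2 < 2^n" "y1 < 2^n" "y2 < 2^n"
  shows "choi n \<Phi> $$ (x1 * 2^n + x2, y1 * 2^n + y2) = \<Phi> (ketbra (2^n) y1 x1) $$ (x2, y2)"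
proof -
  let ?N = "2^n :: nat"
  have KC: "\<And>i j. \<Phi> (ketbra ?N i j) \<in> carrier_mat ?N ?N" using cptpD(1)[OF ok ketbra_carrier] .
  have i1: "x1 * ?N + x2 < ?N * ?N" "y1 * ?N + y2 < ?N * ?N" using b by (simp_all add: idx_less)
  have "choi n \<Phi> $$ (x1 * ?N + x2, y1 * ?N + y2) =
     (\<Sum>i<?N. \<Sum>j<?N. kron (transpose_mat (ketbra ?N i j)) (\<Phi> (ketbra ?N i j)) $$ (x1 * ?N + x2, y1 * ?N + y2))"
    unfolding choi_def Let_def using i1 by simp
  also have "\<dots> = (\<Sum>i<?N. \<Sum>j<?N. (if y1 = i \<and> x1 = j then 1 else 0) * \<Phi> (ketbra ?N i j) $$ (x2, y2))"
  proof (intro sum.cong refl)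
    fix i j
    have D: "dim_row (\<Phi> (ketbra ?N i j)) = ?N" "dim_col (\<Phi> (ketbra ?N i j)) = ?N" using KC[of i j] by auto
    have "kron (transpose_mat (ketbra ?N i j)) (\<Phi> (ketbra ?N i j)) $$ (x1 * ?N + x2, y1 * ?N + y2)
        = transpose_mat (ketbra ?N i j) $$ (x1, y1) * \<Phi> (ketbra ?N i j) $$ (x2, y2)"
      using kron_index2[of x1 "transpose_mat (ketbra ?N i j)" y1 x2 "\<Phi> (ketbra ?N i j)" y2] b D
      by (simp add: ketbra_def)
    also have "\<dots> = (if y1 = i \<and> x1 = j then 1 else 0) * \<Phi> (ketbra ?N i j) $$ (x2, y2)"
      using b by (simp add: ketbra_def)
    finally show "kron (transpose_mat (ketbra ?N i j)) (\<Phi> (ketbra ?N i j)) $$ (x1 * ?N + x2, y1 * ?N + y2)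
        = (if y1 = i \<and> x1 = j then 1 else 0) * \<Phi> (ketbra ?N i j) $$ (x2, y2)" .
  qed
  also have "\<dots> = \<Phi> (ketbra ?N y1 x1) $$ (x2, y2)"
  proof -
    have "\<And>i. (\<Sum>j<?N. (if y1 = i \<and> x1 = j then 1 else 0) * \<Phi> (ketbra ?N i j) $$ (x2, y2))
        = (if y1 = i then \<Phi> (ketbra ?N i x1) $$ (x2, y2) else 0)"
      using b by (auto simp: delta_sum)
    then show ?thesis using b by (simp add: delta_sum)
  qed
  finally show ?thesis .
qed

lemma anti_entry:
  assumes "Q \<in> carrier_mat N N" "\<sigma> \<in> carrier_mat N N" "u < N" "v < N"
  shows "anti Q \<sigma> $$ (u,v) = (1/2) * ((\<Sum>t<N. Q $$ (u,t) * \<sigma> $$ (t,v)) + (\<Sum>t<N. \<sigma> $$ (u,t) * Q $$ (t,v)))"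
proof -
  have m1: "(Q*\<sigma>)$$(u,v) = (\<Sum>t<N. Q$$(u,t)*\<sigma>$$(t,v))" using assms by (subst mult_entry) auto
  have m2: "(\<sigma>*Q)$$(u,v) = (\<Sum>t<N. \<sigma>$$(u,t)*Q$$(t,v))" using assms by (subst mult_entry) auto
  have "anti Q \<sigma> $$ (u,v) = (1/2) * ((Q*\<sigma>)$$(u,v) + (\<sigma>*Q)$$(u,v))"
    unfolding anti_def using assms by (simp del: index_mult_mat(1))
  then show ?thesis unfolding m1 m2 .
qed


lemma lemK:
  assumes \<tau>: "\<tau> \<in> carrier_mat (2^n) (2^n)" and b: "x1 < 2^n" "y1 < 2^n" "u < 2^n" "v < 2^n"
  shows "(\<Sum>a<4^n. pauli_n n a $$ (x1,y1) * anti (pauli_n n a) \<tau> $$ (u,v))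
       = (2^n / 2) * ((if y1 = u then \<tau> $$ (x1,v) else 0) + (if x1 = v then \<tau> $$ (u,y1) else 0))"
proof -
  let ?N = "2^n :: nat" and ?P = "pauli_n n"
  have "(\<Sum>a<4^n. ?P a $$ (x1,y1) * anti (?P a) \<tau> $$ (u,v))
      = (\<Sum>a<4^n. (1/2) * ((\<Sum>t<?N. \<tau> $$ (t,v) * (?P a $$ (x1,y1) * ?P a $$ (u,t)))
                          + (\<Sum>t<?N. \<tau> $$ (u,t) * (?P a $$ (x1,y1) * ?P a $$ (t,v)))))"
  proof (intro sum.cong refl)
    fix a
    have "anti (?P a) \<tau> $$ (u,v) = (1/2) * ((\<Sum>t<?N. ?P a $$ (u,t) * \<tau> $$ (t,v)) + (\<Sum>t<?N. \<tau> $$ (u,t) * ?P a $$ (t,v)))"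
      by (rule anti_entry[OF pauli_n_carrier \<tau> b(3,4)])
    then show "?P a $$ (x1,y1) * anti (?P a) \<tau> $$ (u,v) = (1/2) * ((\<Sum>t<?N. \<tau> $$ (t,v) * (?P a $$ (x1,y1) * ?P a $$ (u,t)))
                          + (\<Sum>t<?N. \<tau> $$ (u,t) * (?P a $$ (x1,y1) * ?P a $$ (t,v))))"
      by (simp add: sum_distrib_left distrib_left mult_ac)
  qed
  also have "\<dots> = (1/2) * ((\<Sum>t<?N. \<tau> $$ (t,v) * (\<Sum>a<4^n. ?P a $$ (x1,y1) * ?P a $$ (u,t)))
                          + (\<Sum>t<?N. \<tau> $$ (u,t) * (\<Sum>a<4^n. ?P a $$ (x1,y1) * ?P a $$ (t,v))))"
    by (simp only: sum_distrib_left[symmetric] sum.distrib) (simp only: sum_distrib_left sum.swap[of _ "{..<4^n}" "{..<?N}"])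
  also have "\<dots> = (1/2) * ((\<Sum>t<?N. \<tau> $$ (t,v) * (if x1 = t \<and> y1 = u then 2^n else 0))
                          + (\<Sum>t<?N. \<tau> $$ (u,t) * (if x1 = v \<and> y1 = t then 2^n else 0)))"
    using b by (simp add: pauli_complete)
  also have "\<dots> = (1/2) * ((if y1 = u then \<tau> $$ (x1,v) * 2^n else 0) + (if x1 = v then \<tau> $$ (u,y1) * 2^n else 0))"
  proof -
    have "(\<Sum>t<?N. \<tau> $$ (t,v) * (if x1 = t \<and> y1 = u then 2^n else 0)) = (if y1 = u then \<tau> $$ (x1,v) * 2^n else 0)"
    proof (cases "y1 = u")
      case True
      have "(\<Sum>t<?N. \<tau> $$ (t,v) * (if x1 = t \<and> y1 = u then 2^n else 0)) = (\<Sum>t<?N. if x1 = t then \<tau> $$ (t,v) * 2^n else 0)"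
        using True by (intro sum.cong refl) auto
      then show ?thesis using True b by (simp add: sum.delta)
    qed simp
    moreover have "(\<Sum>t<?N. \<tau> $$ (u,t) * (if x1 = v \<and> y1 = t then 2^n else 0)) = (if x1 = v then \<tau> $$ (u,y1) * 2^n else 0)"
    proof (cases "x1 = v")
      case True
      have "(\<Sum>t<?N. \<tau> $$ (u,t) * (if x1 = v \<and> y1 = t then 2^n else 0)) = (\<Sum>t<?N. if y1 = t then \<tau> $$ (u,t) * 2^n else 0)"
        using True by (intro sum.cong refl) auto
      then show ?thesis using True b by (simp add: sum.delta)
    qed simp
    ultimately show ?thesis by simp
  qed
  also have "\<dots> = (2^n / 2) * ((if y1 = u then \<tau> $$ (x1,v) else 0) + (if x1 = v then \<tau> $$ (u,y1) else 0))"
    by (simp add: field_simps)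
  finally show ?thesis .
qed

lemma kron_index_c:
  assumes "A \<in> carrier_mat a b" "B \<in> carrier_mat c d" "i1 < a" "j1 < b" "i2 < c" "j2 < d"
  shows "kron A B $$ (i1 * c + i2, j1 * d + j2) = A $$ (i1, j1) * B $$ (i2, j2)"
  using kron_index2[of i1 A j1 i2 B j2] assms by auto

lemma kron_tau_one_entry:
  assumes "\<tau> \<in> carrier_mat N N" "x1 < N" "x2 < N" "t1 < N" "t2 < N"
  shows "kron \<tau> (1\<^sub>m N) $$ (x1 * N + x2, t1 * N + t2) = \<tau> $$ (x1, t1) * (if x2 = t2 then 1 else 0)"
  using kron_index2[of x1 \<tau> t1 x2 "1\<^sub>m N" t2] assms by simp

lemma sum_if_outer:
  fixes g :: "nat \<Rightarrow> nat \<Rightarrow> complex"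
  assumes "y < N"
  shows "(\<Sum>u<N. \<Sum>v<M. if y = u then g u v else 0) = (\<Sum>v<M. g y v)"
proof -
  have "\<And>u. (\<Sum>v<M. if y = u then g u v else 0) = (if y = u then (\<Sum>v<M. g u v) else 0)" by auto
  then show ?thesis using assms by (simp add: sum.delta)
qed

lemma lemT:
  assumes ok: "cptp n \<Phi>" and \<tau>: "\<tau> \<in> carrier_mat (2^n) (2^n)"
    and b: "x1 < 2^n" "x2 < 2^n" "y1 < 2^n" "y2 < 2^n"
  shows "(\<Sum>a<4^n. \<Sum>j<4^n. mtrace (pauli_n n j * \<Phi> (anti (pauli_n n a) \<tau>))
            * kron (pauli_n n a) (pauli_n n j) $$ (x1 * 2^n + x2, y1 * 2^n + y2)) / (2^n * 2^n)
       = (1/2) * ((kron \<tau> (1\<^sub>m (2^n)) * choi n \<Phi>) $$ (x1 * 2^n + x2, y1 * 2^n + y2)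
               + (choi n \<Phi> * kron \<tau> (1\<^sub>m (2^n))) $$ (x1 * 2^n + x2, y1 * 2^n + y2))"
proof -
  let ?N = "2^n :: nat" and ?P = "pauli_n n"
  let ?W = "\<lambda>a. \<Phi> (anti (?P a) \<tau>)"
  let ?A = "\<lambda>a. anti (?P a) \<tau>"
  let ?G = "\<lambda>u v. \<Phi> (ketbra ?N u v) $$ (x2, y2)"
  let ?C = "choi n \<Phi>"
  have AC: "\<And>a. ?A a \<in> carrier_mat ?N ?N" by (rule anti_carrier[OF pauli_n_carrier \<tau>])
  have WC: "\<And>a. ?W a \<in> carrier_mat ?N ?N" by (rule cptpD(1)[OF ok AC])
  have "(\<Sum>a<4^n. \<Sum>j<4^n. mtrace (?P j * ?W a) * kron (?P a) (?P j) $$ (x1 * ?N + x2, y1 * ?N + y2))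
      = (\<Sum>a<4^n. ?P a $$ (x1,y1) * (\<Sum>j<4^n. mtrace (?P j * ?W a) * ?P j $$ (x2,y2)))"
    using b by (simp add: kron_index_c[OF pauli_n_carrier pauli_n_carrier] sum_distrib_left mult_ac)
  also have "\<dots> = (\<Sum>a<4^n. ?P a $$ (x1,y1) * (2^n * ?W a $$ (x2,y2)))"
    using b by (simp add: pauli_expand[OF WC])
  also have "\<dots> = (\<Sum>a<4^n. ?P a $$ (x1,y1) * (2^n * (\<Sum>u<?N. \<Sum>v<?N. ?A a $$ (u,v) * ?G u v)))"
    using b by (simp add: phi_expand[OF ok AC])
  also have "\<dots> = 2^n * (\<Sum>u<?N. \<Sum>v<?N. ?G u v * (\<Sum>a<4^n. ?P a $$ (x1,y1) * ?A a $$ (u,v)))"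
  proof -
    have "(\<Sum>a<4^n. ?P a $$ (x1,y1) * (2^n * (\<Sum>u<?N. \<Sum>v<?N. ?A a $$ (u,v) * ?G u v)))
        = 2^n * (\<Sum>a<4^n. \<Sum>u<?N. \<Sum>v<?N. ?G u v * (?P a $$ (x1,y1) * ?A a $$ (u,v)))"
      by (simp add: sum_distrib_left mult_ac)
    also have "\<dots> = 2^n * (\<Sum>u<?N. \<Sum>a<4^n. \<Sum>v<?N. ?G u v * (?P a $$ (x1,y1) * ?A a $$ (u,v)))"
      by (simp only: sum.swap[of _ "{..<4^n}" "{..<?N}"])
    also have "\<dots> = 2^n * (\<Sum>u<?N. \<Sum>v<?N. \<Sum>a<4^n. ?G u v * (?P a $$ (x1,y1) * ?A a $$ (u,v)))"
      by (simp only: sum.swap[of _ "{..<4^n}" "{..<?N}"])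
    also have "\<dots> = 2^n * (\<Sum>u<?N. \<Sum>v<?N. ?G u v * (\<Sum>a<4^n. ?P a $$ (x1,y1) * ?A a $$ (u,v)))"
      by (simp only: sum_distrib_left)
    finally show ?thesis .
  qed
  also have "\<dots> = 2^n * (\<Sum>u<?N. \<Sum>v<?N. ?G u v * ((2^n / 2) *
        ((if y1 = u then \<tau> $$ (x1,v) else 0) + (if x1 = v then \<tau> $$ (u,y1) else 0))))"
    using b by (intro arg_cong[where f = "\<lambda>z. 2^n * z"] sum.cong refl) (simp add: lemK[OF \<tau>])
  also have "\<dots> = 2^n * (2^n / 2) * ((\<Sum>v<?N. \<tau> $$ (x1,v) * ?G y1 v) + (\<Sum>u<?N. ?G u x1 * \<tau> $$ (u,y1)))"
  proof -
    have pw: "\<And>u v. ?G u v * ((2^n / 2) * ((if y1 = u then \<tau> $$ (x1,v) else 0) + (if x1 = v then \<tau> $$ (u,y1) else 0)))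
       = (2^n / 2) * ((if y1 = u then \<tau> $$ (x1,v) * ?G u v else 0) + (if x1 = v then ?G u v * \<tau> $$ (u,y1) else 0))"
      by (simp add: algebra_simps)
    have "(\<Sum>u<?N. \<Sum>v<?N. ?G u v * ((2^n / 2) *
        ((if y1 = u then \<tau> $$ (x1,v) else 0) + (if x1 = v then \<tau> $$ (u,y1) else 0))))
       = (\<Sum>u<?N. \<Sum>v<?N. (2^n / 2) * ((if y1 = u then \<tau> $$ (x1,v) * ?G u v else 0) + (if x1 = v then ?G u v * \<tau> $$ (u,y1) else 0)))"
      by (intro sum.cong refl) (rule pw)
    also have "\<dots> = (2^n / 2) * ((\<Sum>u<?N. \<Sum>v<?N. if y1 = u then \<tau> $$ (x1,v) * ?G u v else 0)
                    + (\<Sum>u<?N. \<Sum>v<?N. if x1 = v then ?G u v * \<tau> $$ (u,y1) else 0))"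
      by (simp only: distrib_left sum.distrib sum_distrib_left)
    also have "\<dots> = (2^n / 2) * ((\<Sum>v<?N. \<tau> $$ (x1,v) * ?G y1 v) + (\<Sum>u<?N. ?G u x1 * \<tau> $$ (u,y1)))"
      using b by (simp add: sum.delta sum_if_outer)
    finally show ?thesis by (simp add: mult.assoc)
  qed
  finally have L: "(\<Sum>a<4^n. \<Sum>j<4^n. mtrace (?P j * ?W a) * kron (?P a) (?P j) $$ (x1 * ?N + x2, y1 * ?N + y2))
     = 2^n * (2^n / 2) * ((\<Sum>v<?N. \<tau> $$ (x1,v) * ?G y1 v) + (\<Sum>u<?N. ?G u x1 * \<tau> $$ (u,y1)))" .
  have KT: "kron \<tau> (1\<^sub>m ?N) \<in> carrier_mat (?N * ?N) (?N * ?N)" using kron_carrier[OF \<tau> one_carrier_mat] .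
  have CC: "?C \<in> carrier_mat (?N * ?N) (?N * ?N)" by (rule choi_carrier)
  have xi: "x1 * ?N + x2 < ?N * ?N" "y1 * ?N + y2 < ?N * ?N" using b by (simp_all add: idx_less)
  have R1: "(kron \<tau> (1\<^sub>m ?N) * ?C) $$ (x1 * ?N + x2, y1 * ?N + y2) = (\<Sum>v<?N. \<tau> $$ (x1,v) * ?G y1 v)"
  proof -
    have "(kron \<tau> (1\<^sub>m ?N) * ?C) $$ (x1 * ?N + x2, y1 * ?N + y2)
        = (\<Sum>t<?N * ?N. kron \<tau> (1\<^sub>m ?N) $$ (x1 * ?N + x2, t) * ?C $$ (t, y1 * ?N + y2))"
      using KT CC xi by (subst mult_entry) auto
    also have "\<dots> = (\<Sum>t1<?N. \<Sum>t2<?N. kron \<tau> (1\<^sub>m ?N) $$ (x1 * ?N + x2, t1 * ?N + t2) * ?C $$ (t1 * ?N + t2, y1 * ?N + y2))"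
      by (rule sum_split_mult)
    also have "\<dots> = (\<Sum>t1<?N. \<Sum>t2<?N. (if x2 = t2 then 1 else 0) * (\<tau> $$ (x1, t1) * \<Phi> (ketbra ?N y1 t1) $$ (t2, y2)))"
      using b \<tau> by (intro sum.cong refl) (simp add: kron_tau_one_entry choi_entry[OF ok])
    also have "\<dots> = (\<Sum>v<?N. \<tau> $$ (x1,v) * ?G y1 v)"
      using b by (simp add: delta_sum)
    finally show ?thesis .
  qed
  have R2: "(?C * kron \<tau> (1\<^sub>m ?N)) $$ (x1 * ?N + x2, y1 * ?N + y2) = (\<Sum>u<?N. ?G u x1 * \<tau> $$ (u,y1))"
  proof -
    have "(?C * kron \<tau> (1\<^sub>m ?N)) $$ (x1 * ?N + x2, y1 * ?N + y2)
        = (\<Sum>t<?N * ?N. ?C $$ (x1 * ?N + x2, t) * kron \<tau> (1\<^sub>m ?N) $$ (t, y1 * ?N + y2))"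
      using KT CC xi by (subst mult_entry) auto
    also have "\<dots> = (\<Sum>t1<?N. \<Sum>t2<?N. ?C $$ (x1 * ?N + x2, t1 * ?N + t2) * kron \<tau> (1\<^sub>m ?N) $$ (t1 * ?N + t2, y1 * ?N + y2))"
      by (rule sum_split_mult)
    also have "\<dots> = (\<Sum>t1<?N. \<Sum>t2<?N. (if t2 = y2 then 1 else 0) * (\<Phi> (ketbra ?N t1 x1) $$ (x2, t2) * \<tau> $$ (t1, y1)))"
      using b \<tau> by (intro sum.cong refl) (simp add: kron_tau_one_entry choi_entry[OF ok])
    also have "\<dots> = (\<Sum>u<?N. ?G u x1 * \<tau> $$ (u,y1))"
      using b by (simp add: delta_sum')
    finally show ?thesis .
  qed
  show ?thesis unfolding R1 R2 L by (simp add: field_simps)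
qed


abbreviation LL :: "nat \<Rightarrow> nat \<Rightarrow> nat list set" where
  "LL n p \<equiv> {is. length is = p \<and> set is \<subseteq> {..<4 ^ n}}"

lemma LL_finite: "finite (LL n p)"
proof -
  have "LL n p = {xs. set xs \<subseteq> {..<4^n} \<and> length xs = p}" by auto
  then show ?thesis using finite_lists_length_eq[of "{..<4^n::nat}" p] by simp
qed

lemma LL_snoc_image: "LL n (Suc p) = (\<lambda>(xs, a). xs @ [a]) ` (LL n p \<times> {..<4^n})"
proof
  show "LL n (Suc p) \<subseteq> (\<lambda>(xs, a). xs @ [a]) ` (LL n p \<times> {..<4^n})"
  proof
    fix zs assume "zs \<in> LL n (Suc p)"
    then have l: "length zs = Suc p" and s: "set zs \<subseteq> {..<4^n}" by auto
    then have ne: "zs \<noteq> []" by auto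
    have e: "zs = butlast zs @ [last zs]" using ne by simp
    have "butlast zs \<in> LL n p" using l s by (auto dest: in_set_butlastD)
    moreover have "last zs \<in> {..<4^n}" using s ne last_in_set by blast
    ultimately show "zs \<in> (\<lambda>(xs, a). xs @ [a]) ` (LL n p \<times> {..<4^n})"
      using e by (intro image_eqI[of _ _ "(butlast zs, last zs)"]) auto
  qed
qed auto

lemma sum_LL_snoc:
  "(\<Sum>is\<in>LL n (Suc p). f is) = (\<Sum>xs\<in>LL n p. \<Sum>a<4^n. f (xs @ [a]))"
proof -
  have inj: "inj_on (\<lambda>(xs, a). xs @ [a]) (LL n p \<times> {..<4^n})"
    by (auto simp: inj_on_def)
  have "(\<Sum>is\<in>LL n (Suc p). f is) = (\<Sum>q\<in>LL n p \<times> {..<4^n}. f ((\<lambda>(xs, a). xs @ [a]) q))"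
    unfolding LL_snoc_image by (rule sum.reindex[OF inj, unfolded comp_def])
  also have "\<dots> = (\<Sum>xs\<in>LL n p. \<Sum>a<4^n. f (xs @ [a]))"
    by (simp add: sum.cartesian_product split_def)
  finally show ?thesis .
qed

abbreviation KK :: "nat \<Rightarrow> nat list \<Rightarrow> complex mat" where
  "KK n xs \<equiv> kron_list (map (pauli_n n) xs)"

lemma KK_carrier: "KK n xs \<in> carrier_mat ((2^n)^length xs) ((2^n)^length xs)"
proof (induction xs)
  case Nil then show ?case by simp
next
  case (Cons a xs)
  then show ?case using kron_carrier[OF pauli_n_carrier[of n a] Cons.IH] by simp
qed

lemma KK_append: "KK n (xs @ ys) = kron (KK n xs) (KK n ys)"
proof (induction xs)
  case Nil then show ?case using kron_one_left[of "KK n ys"] by simp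
next
  case (Cons a xs)
  then show ?case by (simp add: kron_assoc)
qed

lemma KK_single: "KK n [a] = pauli_n n a"
  using kron_one_right[of "pauli_n n a"] by simp

lemma KK_two: "KK n [a, j] = kron (pauli_n n a) (pauli_n n j)"
  using kron_one_right[of "pauli_n n j"] by simp

lemma pdm_entry:
  assumes "r < (2^n)^k" "c < (2^n)^k"
  shows "pdm n \<rho>1 Mc k $$ (r, c) = (1 / (2^n)^k) * (\<Sum>is\<in>LL n k. corr n \<rho>1 Mc is * KK n is $$ (r, c))"
proof -
  have e: "(2::nat)^(k*n) = (2^n)^k" by (simp add: power_mult[symmetric] mult.commute)
  show ?thesis unfolding pdm_def Let_def e using assms by simp
qed

lemma pdm_carrier: "pdm n \<rho>1 Mc k \<in> carrier_mat ((2^n)^k) ((2^n)^k)"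
proof -
  have e: "(2::nat)^(k*n) = (2^n)^k" by (simp add: power_mult[symmetric] mult.commute)
  show ?thesis unfolding pdm_def Let_def e by simp
qed


lemma corr_snoc1:
  assumes \<rho>: "\<rho>1 \<in> carrier_mat (2^n) (2^n)" and ok: "\<forall>\<beta>. 1 \<le> \<beta> \<longrightarrow> \<beta> \<le> p \<longrightarrow> cptp n (Mc \<beta>)"
    and xs: "length xs = p"
  shows "corr n \<rho>1 Mc (xs @ [l]) = mtrace (pauli_n n l * evolve n Mc 1 \<rho>1 xs)"
proof -
  have c1: "\<forall>\<beta>. 1 \<le> \<beta> \<longrightarrow> Suc \<beta> < 1 + length xs + length [l] \<longrightarrow> cptp n (Mc \<beta>)" using ok xs by auto
  have c2: "\<forall>\<beta>. 1 \<le> \<beta> \<longrightarrow> \<beta> < 1 + length xs \<longrightarrow> cptp n (Mc \<beta>)" using ok xs by auto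
  have "corr n \<rho>1 Mc (xs @ [l]) = corr_aux n Mc (1 + length xs) (evolve n Mc 1 \<rho>1 xs) [l]"
    unfolding corr_def by (rule corr_append[OF c1 \<rho>]) simp
  also have "\<dots> = mtrace (pauli_n n l * evolve n Mc 1 \<rho>1 xs)"
    by (rule corr_last[OF evolve_carrier[OF c2 \<rho>]])
  finally show ?thesis .
qed

lemma corr_snoc2:
  assumes \<rho>: "\<rho>1 \<in> carrier_mat (2^n) (2^n)" and ok: "\<forall>\<beta>. 1 \<le> \<beta> \<longrightarrow> \<beta> \<le> Suc p \<longrightarrow> cptp n (Mc \<beta>)"
    and xs: "length xs = p"
  shows "corr n \<rho>1 Mc (xs @ [a, j]) = mtrace (pauli_n n j * Mc (Suc p) (anti (pauli_n n a) (evolve n Mc 1 \<rho>1 xs)))"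
proof -
  let ?\<tau> = "evolve n Mc 1 \<rho>1 xs"
  have c1: "\<forall>\<beta>. 1 \<le> \<beta> \<longrightarrow> Suc \<beta> < 1 + length xs + length [a, j] \<longrightarrow> cptp n (Mc \<beta>)" using ok xs by auto
  have c2: "\<forall>\<beta>. 1 \<le> \<beta> \<longrightarrow> \<beta> < 1 + length xs \<longrightarrow> cptp n (Mc \<beta>)" using ok xs by auto
  have \<tau>: "?\<tau> \<in> carrier_mat (2^n) (2^n)" by (rule evolve_carrier[OF c2 \<rho>])
  have okp: "cptp n (Mc (1 + length xs))" using ok xs by auto
  have c3: "\<forall>\<beta>. Suc (1 + length xs) \<le> \<beta> \<longrightarrow> Suc \<beta> < Suc (1 + length xs) + length [j] \<longrightarrow> cptp n (Mc \<beta>)" by auto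
  have "corr n \<rho>1 Mc (xs @ [a, j]) = corr_aux n Mc (1 + length xs) ?\<tau> [a, j]"
    unfolding corr_def by (rule corr_append[OF c1 \<rho>]) simp
  also have "\<dots> = corr_aux n Mc (Suc (1 + length xs)) (Mc (1 + length xs) (anti (pauli_n n a) ?\<tau>)) [j]"
    by (rule corr_step[OF okp \<tau> c3]) simp
  also have "\<dots> = mtrace (pauli_n n j * Mc (1 + length xs) (anti (pauli_n n a) ?\<tau>))"
    by (rule corr_last[OF cptpD(1)[OF okp anti_carrier[OF pauli_n_carrier \<tau>]]])
  finally show ?thesis using xs by simp
qed

lemma pdmB:
  assumes \<rho>: "\<rho>1 \<in> carrier_mat (2^n) (2^n)" and ok: "\<forall>\<beta>. 1 \<le> \<beta> \<longrightarrow> \<beta> \<le> p \<longrightarrow> cptp n (Mc \<beta>)"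
    and b: "r1 < (2^n)^p" "c1 < (2^n)^p" "x < 2^n" "y < 2^n"
  shows "pdm n \<rho>1 Mc (Suc p) $$ (r1 * 2^n + x, c1 * 2^n + y)
     = (1 / (2^n)^p) * (\<Sum>xs\<in>LL n p. KK n xs $$ (r1, c1) * evolve n Mc 1 \<rho>1 xs $$ (x, y))"
proof -
  let ?N = "2^n :: nat"
  have r: "r1 * ?N + x < ?N ^ Suc p" "c1 * ?N + y < ?N ^ Suc p"
    using idx_less[OF b(1) b(3)] idx_less[OF b(2) b(4)] by (simp_all only: power_Suc2)
  have "pdm n \<rho>1 Mc (Suc p) $$ (r1 * ?N + x, c1 * ?N + y)
     = (1 / (2^n)^Suc p) * (\<Sum>xs\<in>LL n p. \<Sum>l<4^n. corr n \<rho>1 Mc (xs @ [l]) * KK n (xs @ [l]) $$ (r1 * ?N + x, c1 * ?N + y))"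
    using pdm_entry[OF r] by (simp add: sum_LL_snoc)
  also have "\<dots> = (1 / (2^n)^Suc p) * (\<Sum>xs\<in>LL n p. KK n xs $$ (r1, c1) *
        (\<Sum>l<4^n. mtrace (pauli_n n l * evolve n Mc 1 \<rho>1 xs) * pauli_n n l $$ (x, y)))"
  proof -
    have "\<And>xs l. xs \<in> LL n p \<Longrightarrow> corr n \<rho>1 Mc (xs @ [l]) * KK n (xs @ [l]) $$ (r1 * ?N + x, c1 * ?N + y)
       = KK n xs $$ (r1, c1) * (mtrace (pauli_n n l * evolve n Mc 1 \<rho>1 xs) * pauli_n n l $$ (x, y))"
    proof -
      fix xs l assume "xs \<in> LL n p"
      then have xs: "length xs = p" by simp
      have "KK n (xs @ [l]) $$ (r1 * ?N + x, c1 * ?N + y) = KK n xs $$ (r1, c1) * pauli_n n l $$ (x, y)"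
        unfolding KK_append KK_single
        using kron_index_c[OF KK_carrier[of n xs] pauli_n_carrier[of n l]] b xs by simp
      then show "corr n \<rho>1 Mc (xs @ [l]) * KK n (xs @ [l]) $$ (r1 * ?N + x, c1 * ?N + y)
       = KK n xs $$ (r1, c1) * (mtrace (pauli_n n l * evolve n Mc 1 \<rho>1 xs) * pauli_n n l $$ (x, y))"
        using corr_snoc1[OF \<rho> ok xs] by simp
    qed
    then show ?thesis by (simp add: sum_distrib_left)
  qed
  also have "\<dots> = (1 / (2^n)^Suc p) * (\<Sum>xs\<in>LL n p. KK n xs $$ (r1, c1) * (2^n * evolve n Mc 1 \<rho>1 xs $$ (x, y)))"
  proof -
    have "\<And>xs. xs \<in> LL n p \<Longrightarrow> (\<Sum>l<4^n. mtrace (pauli_n n l * evolve n Mc 1 \<rho>1 xs) * pauli_n n l $$ (x, y))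
         = 2^n * evolve n Mc 1 \<rho>1 xs $$ (x, y)"
    proof -
      fix xs assume "xs \<in> LL n p"
      then have c2: "\<forall>\<beta>. 1 \<le> \<beta> \<longrightarrow> \<beta> < 1 + length xs \<longrightarrow> cptp n (Mc \<beta>)" using ok by auto
      show "(\<Sum>l<4^n. mtrace (pauli_n n l * evolve n Mc 1 \<rho>1 xs) * pauli_n n l $$ (x, y))
         = 2^n * evolve n Mc 1 \<rho>1 xs $$ (x, y)"
        by (rule pauli_expand[OF evolve_carrier[OF c2 \<rho>] b(3,4)])
    qed
    then show ?thesis by simp
  qed
  also have "\<dots> = (1 / (2^n)^p) * (\<Sum>xs\<in>LL n p. KK n xs $$ (r1, c1) * evolve n Mc 1 \<rho>1 xs $$ (x, y))"
    by (simp add: sum_distrib_left field_simps)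
  finally show ?thesis by simp
qed

lemma sum_pull: "(\<Sum>x\<in>A. f x * (c * g x)) = (c::complex) * (\<Sum>x\<in>A. f x * g x)"
  by (simp add: sum_distrib_left mult.left_commute)

lemma scal_pow: "(x::complex) \<noteq> 0 \<Longrightarrow> (1 / x^Suc (Suc p)) * ((x * x) * S) = (1 / x^p) * S"
  by (simp add: field_simps)

definition Tm :: "complex mat \<Rightarrow> complex mat \<Rightarrow> nat \<Rightarrow> complex mat" where
  "Tm \<tau> C N = (1/2 :: complex) \<cdot>\<^sub>m (kron \<tau> (1\<^sub>m N) * C + C * kron \<tau> (1\<^sub>m N))"

lemma pdmA:
  assumes \<rho>: "\<rho>1 \<in> carrier_mat (2^n) (2^n)" and ok: "\<forall>\<beta>. 1 \<le> \<beta> \<longrightarrow> \<beta> \<le> Suc p \<longrightarrow> cptp n (Mc \<beta>)"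
    and b: "r1 < (2^n)^p" "c1 < (2^n)^p" "x1 < 2^n" "x2 < 2^n" "y1 < 2^n" "y2 < 2^n"
  shows "pdm n \<rho>1 Mc (Suc (Suc p)) $$ (r1 * (2^n * 2^n) + (x1 * 2^n + x2), c1 * (2^n * 2^n) + (y1 * 2^n + y2))
     = (1 / (2^n)^p) * (\<Sum>xs\<in>LL n p. KK n xs $$ (r1, c1) *
         ((1/2) * ((kron (evolve n Mc 1 \<rho>1 xs) (1\<^sub>m (2^n)) * choi n (Mc (Suc p))) $$ (x1 * 2^n + x2, y1 * 2^n + y2)
               + (choi n (Mc (Suc p)) * kron (evolve n Mc 1 \<rho>1 xs) (1\<^sub>m (2^n))) $$ (x1 * 2^n + x2, y1 * 2^n + y2))))"
proof -
  let ?N = "2^n :: nat"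
  let ?r = "r1 * (?N * ?N) + (x1 * ?N + x2)" and ?c = "c1 * (?N * ?N) + (y1 * ?N + y2)"
  let ?\<tau> = "\<lambda>xs. evolve n Mc 1 \<rho>1 xs"
  let ?\<Phi> = "Mc (Suc p)"
  have okp: "cptp n ?\<Phi>" using ok by auto
  have x: "x1 * ?N + x2 < ?N * ?N" "y1 * ?N + y2 < ?N * ?N" using b by (simp_all add: idx_less)
  have r: "?r < ?N ^ Suc (Suc p)" "?c < ?N ^ Suc (Suc p)"
  proof -
    have eq: "?N ^ Suc (Suc p) = ?N^p * (?N * ?N)" by (simp only: power_Suc2 mult.assoc)
    show "?r < ?N ^ Suc (Suc p)" "?c < ?N ^ Suc (Suc p)"
      unfolding eq using idx_less[OF b(1) x(1)] idx_less[OF b(2) x(2)] by auto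
  qed
  have "pdm n \<rho>1 Mc (Suc (Suc p)) $$ (?r, ?c)
     = (1 / (2^n)^Suc (Suc p)) * (\<Sum>xs\<in>LL n p. \<Sum>a<4^n. \<Sum>j<4^n. corr n \<rho>1 Mc ((xs @ [a]) @ [j]) * KK n ((xs @ [a]) @ [j]) $$ (?r, ?c))"
    using pdm_entry[OF r] by (simp only: sum_LL_snoc)
  also have "\<dots> = (1 / (2^n)^Suc (Suc p)) * (\<Sum>xs\<in>LL n p. KK n xs $$ (r1, c1) *
        (\<Sum>a<4^n. \<Sum>j<4^n. mtrace (pauli_n n j * ?\<Phi> (anti (pauli_n n a) (?\<tau> xs)))
            * kron (pauli_n n a) (pauli_n n j) $$ (x1 * ?N + x2, y1 * ?N + y2)))"
  proof -
    have "\<And>xs a j. xs \<in> LL n p \<Longrightarrow> corr n \<rho>1 Mc ((xs @ [a]) @ [j]) * KK n ((xs @ [a]) @ [j]) $$ (?r, ?c)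
       = KK n xs $$ (r1, c1) * (mtrace (pauli_n n j * ?\<Phi> (anti (pauli_n n a) (?\<tau> xs)))
            * kron (pauli_n n a) (pauli_n n j) $$ (x1 * ?N + x2, y1 * ?N + y2))"
    proof -
      fix xs a j assume "xs \<in> LL n p"
      then have xs: "length xs = p" by simp
      have e: "(xs @ [a]) @ [j] = xs @ [a, j]" by simp
      have KC: "kron (pauli_n n a) (pauli_n n j) \<in> carrier_mat (?N * ?N) (?N * ?N)"
        using kron_carrier[OF pauli_n_carrier pauli_n_carrier] .
      have "KK n (xs @ [a, j]) $$ (?r, ?c) = KK n xs $$ (r1, c1) * kron (pauli_n n a) (pauli_n n j) $$ (x1 * ?N + x2, y1 * ?N + y2)"
        unfolding KK_append KK_two
        using kron_index_c[OF KK_carrier[of n xs] KC] b x xs by simp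
      then show "corr n \<rho>1 Mc ((xs @ [a]) @ [j]) * KK n ((xs @ [a]) @ [j]) $$ (?r, ?c)
       = KK n xs $$ (r1, c1) * (mtrace (pauli_n n j * ?\<Phi> (anti (pauli_n n a) (?\<tau> xs)))
            * kron (pauli_n n a) (pauli_n n j) $$ (x1 * ?N + x2, y1 * ?N + y2))"
        unfolding e using corr_snoc2[OF \<rho> ok xs] by simp
    qed
    then show ?thesis by (simp add: sum_distrib_left)
  qed
  also have "\<dots> = (1 / (2^n)^Suc (Suc p)) * (\<Sum>xs\<in>LL n p. KK n xs $$ (r1, c1) *
        ((2^n * 2^n) * ((1/2) * ((kron (?\<tau> xs) (1\<^sub>m ?N) * choi n ?\<Phi>) $$ (x1 * ?N + x2, y1 * ?N + y2)
               + (choi n ?\<Phi> * kron (?\<tau> xs) (1\<^sub>m ?N)) $$ (x1 * ?N + x2, y1 * ?N + y2)))))"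
  proof -
    have H: "\<And>xs. xs \<in> LL n p \<Longrightarrow> (\<Sum>a<4^n. \<Sum>j<4^n. mtrace (pauli_n n j * ?\<Phi> (anti (pauli_n n a) (?\<tau> xs)))
            * kron (pauli_n n a) (pauli_n n j) $$ (x1 * ?N + x2, y1 * ?N + y2))
         = (2^n * 2^n) * ((1/2) * ((kron (?\<tau> xs) (1\<^sub>m ?N) * choi n ?\<Phi>) $$ (x1 * ?N + x2, y1 * ?N + y2)
               + (choi n ?\<Phi> * kron (?\<tau> xs) (1\<^sub>m ?N)) $$ (x1 * ?N + x2, y1 * ?N + y2)))"
    proof -
      fix xs assume "xs \<in> LL n p"
      then have c2: "\<forall>\<beta>. 1 \<le> \<beta> \<longrightarrow> \<beta> < 1 + length xs \<longrightarrow> cptp n (Mc \<beta>)" using ok by auto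
      note T = lemT[OF okp evolve_carrier[OF c2 \<rho>] b(3-6)]
      show "(\<Sum>a<4^n. \<Sum>j<4^n. mtrace (pauli_n n j * ?\<Phi> (anti (pauli_n n a) (?\<tau> xs)))
            * kron (pauli_n n a) (pauli_n n j) $$ (x1 * ?N + x2, y1 * ?N + y2))
         = (2^n * 2^n) * ((1/2) * ((kron (?\<tau> xs) (1\<^sub>m ?N) * choi n ?\<Phi>) $$ (x1 * ?N + x2, y1 * ?N + y2)
               + (choi n ?\<Phi> * kron (?\<tau> xs) (1\<^sub>m ?N)) $$ (x1 * ?N + x2, y1 * ?N + y2)))"
        unfolding T[symmetric] by simp
    qed
    show ?thesis
      by (rule arg_cong[where f = "\<lambda>z. (1 / (2^n)^Suc (Suc p) :: complex) * z"], rule sum.cong[OF refl], subst H, assumption, rule refl)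
  qed
  also have "\<dots> = (1 / (2^n)^p) * (\<Sum>xs\<in>LL n p. KK n xs $$ (r1, c1) *
         ((1/2) * ((kron (?\<tau> xs) (1\<^sub>m ?N) * choi n ?\<Phi>) $$ (x1 * ?N + x2, y1 * ?N + y2)
               + (choi n ?\<Phi> * kron (?\<tau> xs) (1\<^sub>m ?N)) $$ (x1 * ?N + x2, y1 * ?N + y2))))"
    unfolding sum_pull by (rule scal_pow) simp
  finally show ?thesis by simp
qed


lemma kron_lin_left:
  assumes X: "X \<in> carrier_mat a a" and Z: "Z \<in> carrier_mat z z" and B: "B \<in> carrier_mat (a*z) (a*z)"
    and Y: "\<And>x. x \<in> S \<Longrightarrow> Y x \<in> carrier_mat a a"
    and hX: "\<And>u v. u < a \<Longrightarrow> v < a \<Longrightarrow> X $$ (u,v) = (\<Sum>x\<in>S. f x * Y x $$ (u,v))"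
    and rc: "r < a*z" "c < a*z"
  shows "(kron X Z * B) $$ (r,c) = (\<Sum>x\<in>S. f x * (kron (Y x) Z * B) $$ (r,c))"
proof -
  have zpos: "z > 0" using rc by (cases z) auto
  have rd: "r div z < a" using rc(1) by (simp add: less_mult_imp_div_less)
  have "(kron X Z * B) $$ (r,c) = (\<Sum>t<a*z. kron X Z $$ (r,t) * B $$ (t,c))"
    using X Z B rc by (subst mult_entry) auto
  also have "\<dots> = (\<Sum>t<a*z. (\<Sum>x\<in>S. f x * Y x $$ (r div z, t div z)) * Z $$ (r mod z, t mod z) * B $$ (t,c))"
  proof (intro sum.cong refl)
    fix t assume "t \<in> {..<a*z}"
    then have t: "t < a*z" by simp
    then have td: "t div z < a" by (simp add: less_mult_imp_div_less)
    show "kron X Z $$ (r,t) * B $$ (t,c) = (\<Sum>x\<in>S. f x * Y x $$ (r div z, t div z)) * Z $$ (r mod z, t mod z) * B $$ (t,c)"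
      using X Z rc t by (simp add: kron_index hX[OF rd td])
  qed
  also have "\<dots> = (\<Sum>x\<in>S. f x * (\<Sum>t<a*z. Y x $$ (r div z, t div z) * Z $$ (r mod z, t mod z) * B $$ (t,c)))"
    by (simp add: sum_distrib_left sum_distrib_right sum.swap[of _ S] mult_ac)
  also have "\<dots> = (\<Sum>x\<in>S. f x * (kron (Y x) Z * B) $$ (r,c))"
  proof (intro sum.cong refl arg_cong[where f = "\<lambda>w. f _ * w"])
    fix x assume x: "x \<in> S"
    have "(kron (Y x) Z * B) $$ (r,c) = (\<Sum>t<a*z. kron (Y x) Z $$ (r,t) * B $$ (t,c))"
      using Y[OF x] Z B rc by (subst mult_entry) auto
    also have "\<dots> = (\<Sum>t<a*z. Y x $$ (r div z, t div z) * Z $$ (r mod z, t mod z) * B $$ (t,c))"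
      using Y[OF x] Z rc by (intro sum.cong refl) (simp add: kron_index)
    finally show "(\<Sum>t<a*z. Y x $$ (r div z, t div z) * Z $$ (r mod z, t mod z) * B $$ (t,c)) = (kron (Y x) Z * B) $$ (r,c)" by simp
  qed
  finally show ?thesis .
qed

lemma kron_lin_right:
  assumes X: "X \<in> carrier_mat a a" and Z: "Z \<in> carrier_mat z z" and B: "B \<in> carrier_mat (a*z) (a*z)"
    and Y: "\<And>x. x \<in> S \<Longrightarrow> Y x \<in> carrier_mat a a"
    and hX: "\<And>u v. u < a \<Longrightarrow> v < a \<Longrightarrow> X $$ (u,v) = (\<Sum>x\<in>S. f x * Y x $$ (u,v))"
    and rc: "r < a*z" "c < a*z"
  shows "(B * kron X Z) $$ (r,c) = (\<Sum>x\<in>S. f x * (B * kron (Y x) Z) $$ (r,c))"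
proof -
  have zpos: "z > 0" using rc by (cases z) auto
  have cd: "c div z < a" using rc(2) by (simp add: less_mult_imp_div_less)
  have "(B * kron X Z) $$ (r,c) = (\<Sum>t<a*z. B $$ (r,t) * kron X Z $$ (t,c))"
    using X Z B rc by (subst mult_entry) auto
  also have "\<dots> = (\<Sum>t<a*z. B $$ (r,t) * ((\<Sum>x\<in>S. f x * Y x $$ (t div z, c div z)) * Z $$ (t mod z, c mod z)))"
  proof (intro sum.cong refl)
    fix t assume "t \<in> {..<a*z}"
    then have t: "t < a*z" by simp
    then have td: "t div z < a" by (simp add: less_mult_imp_div_less)
    show "B $$ (r,t) * kron X Z $$ (t,c) = B $$ (r,t) * ((\<Sum>x\<in>S. f x * Y x $$ (t div z, c div z)) * Z $$ (t mod z, c mod z))"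
      using X Z rc t by (simp add: kron_index hX[OF td cd])
  qed
  also have "\<dots> = (\<Sum>x\<in>S. f x * (\<Sum>t<a*z. B $$ (r,t) * (Y x $$ (t div z, c div z) * Z $$ (t mod z, c mod z))))"
    by (simp add: sum_distrib_left sum_distrib_right sum.swap[of _ S] mult_ac)
  also have "\<dots> = (\<Sum>x\<in>S. f x * (B * kron (Y x) Z) $$ (r,c))"
  proof (intro sum.cong refl arg_cong[where f = "\<lambda>w. f _ * w"])
    fix x assume x: "x \<in> S"
    have "(B * kron (Y x) Z) $$ (r,c) = (\<Sum>t<a*z. B $$ (r,t) * kron (Y x) Z $$ (t,c))"
      using Y[OF x] Z B rc by (subst mult_entry) auto
    also have "\<dots> = (\<Sum>t<a*z. B $$ (r,t) * (Y x $$ (t div z, c div z) * Z $$ (t mod z, c mod z)))"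
      using Y[OF x] Z rc by (intro sum.cong refl) (simp add: kron_index)
    finally show "(\<Sum>t<a*z. B $$ (r,t) * (Y x $$ (t div z, c div z) * Z $$ (t mod z, c mod z))) = (B * kron (Y x) Z) $$ (r,c)" by simp
  qed
  finally show ?thesis .
qed


lemma LL_zero: "LL n 0 = {[]}" by auto

lemma LL_zero': "{zs. zs = [] \<and> set zs \<subseteq> A} = {[]}" by auto

lemma idx_decomp:
  fixes i P N :: nat
  assumes "i < P * (N * N)"
  shows "i = (i div (N*N)) * (N*N) + ((i mod (N*N)) div N * N + i mod (N*N) mod N)"
    and "i div (N*N) < P" and "(i mod (N*N)) div N < N" and "i mod (N*N) mod N < N"
proof -
  have NN: "N * N > 0" using assms by (cases "N*N") auto
  then have N: "N > 0" by (cases N) auto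
  show "i = (i div (N*N)) * (N*N) + ((i mod (N*N)) div N * N + i mod (N*N) mod N)" by (simp only: div_mult_mod_eq)
  show "i div (N*N) < P" using assms by (simp add: less_mult_imp_div_less)
  have "i mod (N*N) < N * N" using NN by simp
  then show "(i mod (N*N)) div N < N" by (simp add: less_mult_imp_div_less)
  show "i mod (N*N) mod N < N" using N by simp
qed

lemma part1:
  assumes \<rho>: "\<rho>1 \<in> carrier_mat (2^n) (2^n)" and ok: "cptp n (Mc 1)"
  shows "pdm n \<rho>1 Mc 2 = (1 / 2 :: complex) \<cdot>\<^sub>m (kron \<rho>1 (1\<^sub>m (2 ^ n)) * choi n (Mc 1)
                                 + choi n (Mc 1) * kron \<rho>1 (1\<^sub>m (2 ^ n)))"
proof (rule eq_matI)
  let ?N = "2^n :: nat"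
  let ?C = "choi n (Mc 1)"
  have CC: "?C \<in> carrier_mat (?N * ?N) (?N * ?N)" by (rule choi_carrier)
  have KC: "kron \<rho>1 (1\<^sub>m ?N) \<in> carrier_mat (?N * ?N) (?N * ?N)" using kron_carrier[OF \<rho> one_carrier_mat] .
  have ok': "\<forall>\<beta>. 1 \<le> \<beta> \<longrightarrow> \<beta> \<le> Suc 0 \<longrightarrow> cptp n (Mc \<beta>)" using ok by (auto simp: le_Suc_eq)
  fix i j
  assume i: "i < dim_row ((1 / 2 :: complex) \<cdot>\<^sub>m (kron \<rho>1 (1\<^sub>m ?N) * ?C + ?C * kron \<rho>1 (1\<^sub>m ?N)))"
     and j: "j < dim_col ((1 / 2 :: complex) \<cdot>\<^sub>m (kron \<rho>1 (1\<^sub>m ?N) * ?C + ?C * kron \<rho>1 (1\<^sub>m ?N)))"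
  have i': "i < 1 * (?N * ?N)" and j': "j < 1 * (?N * ?N)" using i j CC KC by auto
  note di = idx_decomp[OF i'] and dj = idx_decomp[OF j']
  have i0: "i div (?N * ?N) = 0" and j0: "j div (?N * ?N) = 0" using di(2) dj(2) by auto
  have "pdm n \<rho>1 Mc (Suc (Suc 0)) $$ (i, j) = pdm n \<rho>1 Mc (Suc (Suc 0)) $$
       (0 * (?N * ?N) + ((i mod (?N*?N)) div ?N * ?N + i mod (?N*?N) mod ?N),
        0 * (?N * ?N) + ((j mod (?N*?N)) div ?N * ?N + j mod (?N*?N) mod ?N))"
    using di(1) dj(1) i0 j0 by simp
  also have "\<dots> = (1/2) * ((kron \<rho>1 (1\<^sub>m ?N) * ?C) $$ (i, j) + (?C * kron \<rho>1 (1\<^sub>m ?N)) $$ (i, j))"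
    using pdmA[OF \<rho> ok', of 0 0 "(i mod (?N*?N)) div ?N" "i mod (?N*?N) mod ?N" "(j mod (?N*?N)) div ?N" "j mod (?N*?N) mod ?N"]
      di dj i0 j0 by (simp add: LL_zero LL_zero')
  also have "\<dots> = ((1 / 2 :: complex) \<cdot>\<^sub>m (kron \<rho>1 (1\<^sub>m ?N) * ?C + ?C * kron \<rho>1 (1\<^sub>m ?N))) $$ (i, j)"
    using i' j' carrier_matD[OF CC] carrier_matD[OF KC] by simp
  finally show "pdm n \<rho>1 Mc 2 $$ (i, j) = ((1 / 2 :: complex) \<cdot>\<^sub>m (kron \<rho>1 (1\<^sub>m ?N) * ?C + ?C * kron \<rho>1 (1\<^sub>m ?N))) $$ (i, j)"
    by (simp add: numeral_2_eq_2)
next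
  let ?N = "2^n :: nat"
  show "dim_row (pdm n \<rho>1 Mc 2) = dim_row ((1 / 2 :: complex) \<cdot>\<^sub>m (kron \<rho>1 (1\<^sub>m (2 ^ n)) * choi n (Mc 1)
                                 + choi n (Mc 1) * kron \<rho>1 (1\<^sub>m (2 ^ n))))"
    using pdm_carrier[of n \<rho>1 Mc 2] choi_carrier[of n "Mc 1"] by (simp add: power2_eq_square)
  show "dim_col (pdm n \<rho>1 Mc 2) = dim_col ((1 / 2 :: complex) \<cdot>\<^sub>m (kron \<rho>1 (1\<^sub>m (2 ^ n)) * choi n (Mc 1)
                                 + choi n (Mc 1) * kron \<rho>1 (1\<^sub>m (2 ^ n))))"
    using pdm_carrier[of n \<rho>1 Mc 2] \<rho> by (simp add: power2_eq_square)
qed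

lemma sum_comb: "(1/2) * ((\<Sum>x\<in>S. c * (k x * a x)) + (\<Sum>x\<in>S. c * (k x * b x))) = (c::complex) * (\<Sum>x\<in>S. k x * ((1/2) * (a x + b x)))"
  by (simp add: sum_distrib_left sum.distrib algebra_simps add_divide_distrib)

lemma part2:
  assumes \<rho>: "\<rho>1 \<in> carrier_mat (2^n) (2^n)" and ok: "\<forall>\<beta>. 1 \<le> \<beta> \<longrightarrow> \<beta> \<le> Suc p \<longrightarrow> cptp n (Mc \<beta>)"
  shows "pdm n \<rho>1 Mc (Suc (Suc p)) = (1 / 2 :: complex) \<cdot>\<^sub>m
             (kron (pdm n \<rho>1 Mc (Suc p)) (1\<^sub>m (2 ^ n)) * kron (1\<^sub>m ((2^n)^p)) (choi n (Mc (Suc p)))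
            + kron (1\<^sub>m ((2^n)^p)) (choi n (Mc (Suc p))) * kron (pdm n \<rho>1 Mc (Suc p)) (1\<^sub>m (2 ^ n)))"
    (is "?L = (1/2) \<cdot>\<^sub>m (?A * ?B + ?B * ?A)")
proof -
  let ?N = "2^n :: nat" and ?Np = "(2^n)^p :: nat"
  let ?C = "choi n (Mc (Suc p))" and ?R = "pdm n \<rho>1 Mc (Suc p)"
  let ?\<tau> = "\<lambda>xs. evolve n Mc 1 \<rho>1 xs"
  let ?Y = "\<lambda>xs. kron (KK n xs) (?\<tau> xs)"
  have okB: "\<forall>\<beta>. 1 \<le> \<beta> \<longrightarrow> \<beta> \<le> p \<longrightarrow> cptp n (Mc \<beta>)" using ok by auto
  have CC: "?C \<in> carrier_mat (?N * ?N) (?N * ?N)" by (rule choi_carrier)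
  have RC: "?R \<in> carrier_mat (?Np * ?N) (?Np * ?N)" using pdm_carrier[of n \<rho>1 Mc "Suc p"] by (simp only: power_Suc2)
  have BC: "?B \<in> carrier_mat (?Np * ?N * ?N) (?Np * ?N * ?N)"
    using kron_carrier[OF one_carrier_mat CC, of ?Np] by (simp add: mult.assoc)
  have AC: "?A \<in> carrier_mat (?Np * ?N * ?N) (?Np * ?N * ?N)"
    using kron_carrier[OF RC one_carrier_mat, of ?N] by simp
  have tC: "\<And>xs. xs \<in> LL n p \<Longrightarrow> ?\<tau> xs \<in> carrier_mat ?N ?N"
  proof -
    fix xs assume "xs \<in> LL n p"
    then have c2: "\<forall>\<beta>. 1 \<le> \<beta> \<longrightarrow> \<beta> < 1 + length xs \<longrightarrow> cptp n (Mc \<beta>)" using ok by auto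
    show "?\<tau> xs \<in> carrier_mat ?N ?N" by (rule evolve_carrier[OF c2 \<rho>])
  qed
  have KC: "\<And>xs. xs \<in> LL n p \<Longrightarrow> KK n xs \<in> carrier_mat ?Np ?Np"
    using KK_carrier by fastforce
  have YC: "\<And>xs. xs \<in> LL n p \<Longrightarrow> ?Y xs \<in> carrier_mat (?Np * ?N) (?Np * ?N)"
    using kron_carrier[OF KC tC] by blast
  have hX: "\<And>u v. u < ?Np * ?N \<Longrightarrow> v < ?Np * ?N \<Longrightarrow> ?R $$ (u,v) = (\<Sum>xs\<in>LL n p. (1 / (2^n)^p) * ?Y xs $$ (u,v))"
  proof -
    fix u v assume u: "u < ?Np * ?N" and v: "v < ?Np * ?N"
    have N: "?N > 0" by simp
    have ud: "u div ?N < ?Np" "v div ?N < ?Np" using u v by (simp_all add: less_mult_imp_div_less)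
    have um: "u mod ?N < ?N" "v mod ?N < ?N" by simp_all
    have "?R $$ (u,v) = ?R $$ (u div ?N * ?N + u mod ?N, v div ?N * ?N + v mod ?N)" by (simp only: div_mult_mod_eq)
    also have "\<dots> = (1 / (2^n)^p) * (\<Sum>xs\<in>LL n p. KK n xs $$ (u div ?N, v div ?N) * ?\<tau> xs $$ (u mod ?N, v mod ?N))"
      by (rule pdmB[OF \<rho> okB ud um])
    also have "\<dots> = (\<Sum>xs\<in>LL n p. (1 / (2^n)^p) * ?Y xs $$ (u div ?N * ?N + u mod ?N, v div ?N * ?N + v mod ?N))"
      unfolding sum_distrib_left
      using kron_index_c[OF KC tC _ _ um] ud by (intro sum.cong refl) (simp add: power_mult_distrib)
    finally show "?R $$ (u,v) = (\<Sum>xs\<in>LL n p. (1 / (2^n)^p) * ?Y xs $$ (u,v))" by (simp only: div_mult_mod_eq)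
  qed
  have prodAB: "\<And>xs. xs \<in> LL n p \<Longrightarrow> kron (?Y xs) (1\<^sub>m ?N) * ?B = kron (KK n xs) (kron (?\<tau> xs) (1\<^sub>m ?N) * ?C)"
  proof -
    fix xs assume xs: "xs \<in> LL n p"
    have "kron (?Y xs) (1\<^sub>m ?N) * ?B = kron (KK n xs) (kron (?\<tau> xs) (1\<^sub>m ?N)) * kron (1\<^sub>m ?Np) ?C"
      by (simp add: kron_assoc)
    also have "\<dots> = kron (KK n xs * 1\<^sub>m ?Np) (kron (?\<tau> xs) (1\<^sub>m ?N) * ?C)"
      using KC[OF xs] tC[OF xs] CC by (intro kron_mult) auto
    also have "KK n xs * 1\<^sub>m ?Np = KK n xs" using KC[OF xs] by simp
    finally show "kron (?Y xs) (1\<^sub>m ?N) * ?B = kron (KK n xs) (kron (?\<tau> xs) (1\<^sub>m ?N) * ?C)" .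
  qed
  have prodBA: "\<And>xs. xs \<in> LL n p \<Longrightarrow> ?B * kron (?Y xs) (1\<^sub>m ?N) = kron (KK n xs) (?C * kron (?\<tau> xs) (1\<^sub>m ?N))"
  proof -
    fix xs assume xs: "xs \<in> LL n p"
    have "?B * kron (?Y xs) (1\<^sub>m ?N) = kron (1\<^sub>m ?Np) ?C * kron (KK n xs) (kron (?\<tau> xs) (1\<^sub>m ?N))"
      by (simp add: kron_assoc)
    also have "\<dots> = kron (1\<^sub>m ?Np * KK n xs) (?C * kron (?\<tau> xs) (1\<^sub>m ?N))"
      using KC[OF xs] tC[OF xs] CC by (intro kron_mult) auto
    also have "1\<^sub>m ?Np * KK n xs = KK n xs" using KC[OF xs] by simp
    finally show "?B * kron (?Y xs) (1\<^sub>m ?N) = kron (KK n xs) (?C * kron (?\<tau> xs) (1\<^sub>m ?N))" .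
  qed
  show ?thesis
  proof (rule eq_matI)
    fix i j assume i: "i < dim_row ((1/2) \<cdot>\<^sub>m (?A * ?B + ?B * ?A))" and j: "j < dim_col ((1/2) \<cdot>\<^sub>m (?A * ?B + ?B * ?A))"
    have i': "i < ?Np * (?N * ?N)" and j': "j < ?Np * (?N * ?N)"
      using i j carrier_matD[OF AC] carrier_matD[OF BC] by (auto simp: mult.assoc)
    note di = idx_decomp[OF i'] and dj = idx_decomp[OF j']
    let ?i1 = "i div (?N*?N)" and ?x1 = "(i mod (?N*?N)) div ?N" and ?x2 = "i mod (?N*?N) mod ?N"
    let ?j1 = "j div (?N*?N)" and ?y1 = "(j mod (?N*?N)) div ?N" and ?y2 = "j mod (?N*?N) mod ?N"
    have i'': "i < ?Np * ?N * ?N" "j < ?Np * ?N * ?N" using i' j' by (simp_all add: mult.assoc)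
    have X12: "?x1 * ?N + ?x2 < ?N * ?N" "?y1 * ?N + ?y2 < ?N * ?N" using di dj by (simp_all add: idx_less)
    have AB: "(?A * ?B) $$ (i,j) = (\<Sum>xs\<in>LL n p. (1 / (2^n)^p) * (KK n xs $$ (?i1, ?j1) *
          (kron (?\<tau> xs) (1\<^sub>m ?N) * ?C) $$ (?x1 * ?N + ?x2, ?y1 * ?N + ?y2)))"
    proof -
      have "(?A * ?B) $$ (i,j) = (\<Sum>xs\<in>LL n p. (1 / (2^n)^p) * (kron (?Y xs) (1\<^sub>m ?N) * ?B) $$ (i,j))"
        by (rule kron_lin_left[OF RC one_carrier_mat BC YC hX i''])
      also have "\<dots> = (\<Sum>xs\<in>LL n p. (1 / (2^n)^p) * (KK n xs $$ (?i1, ?j1) *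
          (kron (?\<tau> xs) (1\<^sub>m ?N) * ?C) $$ (?x1 * ?N + ?x2, ?y1 * ?N + ?y2)))"
      proof (intro sum.cong refl arg_cong[where f = "\<lambda>w. (1 / (2^n)^p) * w"])
        fix xs assume xs: "xs \<in> LL n p"
        have PC: "kron (?\<tau> xs) (1\<^sub>m ?N) * ?C \<in> carrier_mat (?N * ?N) (?N * ?N)"
          using kron_carrier[OF tC[OF xs] one_carrier_mat] CC by (metis mult_carrier_mat)
        show "(kron (?Y xs) (1\<^sub>m ?N) * ?B) $$ (i,j) = KK n xs $$ (?i1, ?j1) *
          (kron (?\<tau> xs) (1\<^sub>m ?N) * ?C) $$ (?x1 * ?N + ?x2, ?y1 * ?N + ?y2)"
          unfolding prodAB[OF xs] using kron_index_c[OF KC[OF xs] PC di(2) dj(2) X12] di(1) dj(1) by simp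
      qed
      finally show ?thesis .
    qed
    have BA: "(?B * ?A) $$ (i,j) = (\<Sum>xs\<in>LL n p. (1 / (2^n)^p) * (KK n xs $$ (?i1, ?j1) *
          (?C * kron (?\<tau> xs) (1\<^sub>m ?N)) $$ (?x1 * ?N + ?x2, ?y1 * ?N + ?y2)))"
    proof -
      have "(?B * ?A) $$ (i,j) = (\<Sum>xs\<in>LL n p. (1 / (2^n)^p) * (?B * kron (?Y xs) (1\<^sub>m ?N)) $$ (i,j))"
        by (rule kron_lin_right[OF RC one_carrier_mat BC YC hX i''])
      also have "\<dots> = (\<Sum>xs\<in>LL n p. (1 / (2^n)^p) * (KK n xs $$ (?i1, ?j1) *
          (?C * kron (?\<tau> xs) (1\<^sub>m ?N)) $$ (?x1 * ?N + ?x2, ?y1 * ?N + ?y2)))"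
      proof (intro sum.cong refl arg_cong[where f = "\<lambda>w. (1 / (2^n)^p) * w"])
        fix xs assume xs: "xs \<in> LL n p"
        have PC: "?C * kron (?\<tau> xs) (1\<^sub>m ?N) \<in> carrier_mat (?N * ?N) (?N * ?N)"
          using kron_carrier[OF tC[OF xs] one_carrier_mat] CC by (metis mult_carrier_mat)
        show "(?B * kron (?Y xs) (1\<^sub>m ?N)) $$ (i,j) = KK n xs $$ (?i1, ?j1) *
          (?C * kron (?\<tau> xs) (1\<^sub>m ?N)) $$ (?x1 * ?N + ?x2, ?y1 * ?N + ?y2)"
          unfolding prodBA[OF xs] using kron_index_c[OF KC[OF xs] PC di(2) dj(2) X12] di(1) dj(1) by simp
      qed
      finally show ?thesis .
    qed
    have "?L $$ (i,j) = ?L $$ (?i1 * (?N * ?N) + (?x1 * ?N + ?x2), ?j1 * (?N * ?N) + (?y1 * ?N + ?y2))"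
      using di(1) dj(1) by simp
    also have "\<dots> = (1 / (2^n)^p) * (\<Sum>xs\<in>LL n p. KK n xs $$ (?i1, ?j1) *
         ((1/2) * ((kron (?\<tau> xs) (1\<^sub>m ?N) * ?C) $$ (?x1 * ?N + ?x2, ?y1 * ?N + ?y2)
               + (?C * kron (?\<tau> xs) (1\<^sub>m ?N)) $$ (?x1 * ?N + ?x2, ?y1 * ?N + ?y2))))"
      by (rule pdmA[OF \<rho> ok di(2) dj(2) di(3) di(4) dj(3) dj(4)])
    also have "\<dots> = (1/2) * ((?A * ?B) $$ (i,j) + (?B * ?A) $$ (i,j))"
      unfolding AB BA by (rule sum_comb[symmetric])
    also have "\<dots> = ((1/2) \<cdot>\<^sub>m (?A * ?B + ?B * ?A)) $$ (i,j)"
      using i'' carrier_matD[OF AC] carrier_matD[OF BC] by simp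
    finally show "?L $$ (i,j) = ((1/2) \<cdot>\<^sub>m (?A * ?B + ?B * ?A)) $$ (i,j)" .
  next
    show "dim_row ?L = dim_row ((1/2) \<cdot>\<^sub>m (?A * ?B + ?B * ?A))"
      using pdm_carrier[of n \<rho>1 Mc "Suc (Suc p)"] carrier_matD[OF BC] by (simp add: power_Suc2 mult.assoc)
    show "dim_col ?L = dim_col ((1/2) \<cdot>\<^sub>m (?A * ?B + ?B * ?A))"
      using pdm_carrier[of n \<rho>1 Mc "Suc (Suc p)"] carrier_matD[OF AC] by (simp add: power_Suc2 mult.assoc)
  qed
qed


theorem theorem2:
  fixes n m :: nat and \<rho>1 :: "complex mat" and Mc :: "nat \<Rightarrow> complex mat \<Rightarrow> complex mat"
  assumes "n \<ge> 1" and "m \<ge> 2"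
    and "density_matrix n \<rho>1"
    and "\<forall>\<alpha>\<in>{1..m-1}. cptp n (Mc \<alpha>)"
  shows "pdm n \<rho>1 Mc 2 =
           (1 / 2 :: complex) \<cdot>\<^sub>m (kron \<rho>1 (1\<^sub>m (2 ^ n)) * choi n (Mc 1)
                                 + choi n (Mc 1) * kron \<rho>1 (1\<^sub>m (2 ^ n)))
         \<and> (\<forall>k\<in>{3..m}. pdm n \<rho>1 Mc k =
           (1 / 2 :: complex) \<cdot>\<^sub>m
             (kron (pdm n \<rho>1 Mc (k - 1)) (1\<^sub>m (2 ^ n))
                * kron (1\<^sub>m (2 ^ ((k - 2) * n))) (choi n (Mc (k - 1)))
            + kron (1\<^sub>m (2 ^ ((k - 2) * n))) (choi n (Mc (k - 1)))
                * kron (pdm n \<rho>1 Mc (k - 1)) (1\<^sub>m (2 ^ n))))"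
proof
  have \<rho>: "\<rho>1 \<in> carrier_mat (2^n) (2^n)" using assms(3) unfolding density_matrix_def psd_def by blast
  have ok1: "cptp n (Mc 1)" using assms(2,4) by auto
  show "pdm n \<rho>1 Mc 2 =
           (1 / 2 :: complex) \<cdot>\<^sub>m (kron \<rho>1 (1\<^sub>m (2 ^ n)) * choi n (Mc 1)
                                 + choi n (Mc 1) * kron \<rho>1 (1\<^sub>m (2 ^ n)))"
    by (rule part1) (rule \<rho>, rule ok1)
  show "\<forall>k\<in>{3..m}. pdm n \<rho>1 Mc k =
           (1 / 2 :: complex) \<cdot>\<^sub>m
             (kron (pdm n \<rho>1 Mc (k - 1)) (1\<^sub>m (2 ^ n))
                * kron (1\<^sub>m (2 ^ ((k - 2) * n))) (choi n (Mc (k - 1)))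
            + kron (1\<^sub>m (2 ^ ((k - 2) * n))) (choi n (Mc (k - 1)))
                * kron (pdm n \<rho>1 Mc (k - 1)) (1\<^sub>m (2 ^ n)))"
  proof
    fix k assume k: "k \<in> {3..m}"
    define p where "p = k - 2"
    have kp: "k = Suc (Suc p)" using k unfolding p_def by auto
    have ok: "\<forall>\<beta>. 1 \<le> \<beta> \<longrightarrow> \<beta> \<le> Suc p \<longrightarrow> cptp n (Mc \<beta>)" using assms(4) k kp by auto
    have e1: "k - 1 = Suc p" and e2: "k - 2 = p" using kp by auto
    have e3: "(2::nat) ^ (p * n) = (2^n)^p" by (simp add: power_mult[symmetric] mult.commute)
    show "pdm n \<rho>1 Mc k =
           (1 / 2 :: complex) \<cdot>\<^sub>m
             (kron (pdm n \<rho>1 Mc (k - 1)) (1\<^sub>m (2 ^ n))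
                * kron (1\<^sub>m (2 ^ ((k - 2) * n))) (choi n (Mc (k - 1)))
            + kron (1\<^sub>m (2 ^ ((k - 2) * n))) (choi n (Mc (k - 1)))
                * kron (pdm n \<rho>1 Mc (k - 1)) (1\<^sub>m (2 ^ n)))"
      unfolding e1 e2 e3 using part2[OF \<rho> ok] by (simp only: kp)
  qed
qed


end
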